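(* There exist absolute constants $c>0$ and $C>0$ such that the following holds. Let $n\ge2$ be an integer and $L,B,\varepsilon>0$ with $\varepsilon\le LB^2/4$. Then for every PIFO algorithm $\mathcal{A}$ there exist a dimension $d\le C\big(1+B\sqrt{L/(n\varepsilon)}\big)$ and $n$ functions $f_1,\dots,f_n:\mathbb{R}^d\to\mathbb{R}$, each $L$-smooth and convex, such that $f=\frac1n\sum_i f_i$ has a minimizer $x^*$ with $\|x_0-x^*\|_2\le B$ ($x_0$ the initial point of $\mathcal{A}$), and the iterates of $\mathcal{A}$ run on $f_1,\dots,f_n$ satisfy $\mathbb{E} f(x_t)-f(x^* )\ge\varepsilon$ for all integers $0\le t\le c\big(n+B\sqrt{nL/\varepsilon}\big)$. That is, $\mathcal{A}$ needs $\Omega(n+B\sqrt{nL/\varepsilon})$ oracle queries to find $\hat x$ with $\mathbb{E} f(\hat x)-f(x^* )<\varepsilon$.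
   Context: A differentiable $g:\mathbb{R}^d\to\mathbb{R}$ is $L$-smooth if $\|\nabla g(x)-\nabla g(y)\|_2\le L\|x-y\|_2$ for all $x,y$. For $\gamma>0$, $\mathrm{prox}^{\gamma}_g(x)=\arg\min_u\{g(u)+\frac{1}{2\gamma}\|x-u\|_2^2\}$. PIFO algorithm: given $f_1,\dots,f_n:\mathbb{R}^d\to\mathbb{R}$ and $f=\frac1n\sum_i f_i$, a PIFO algorithm $\mathcal{A}$ is specified by a probability vector $(p_1,\dots,p_n)$ ($p_j\ge0$, $\sum_j p_j=1$), an initial point $x_0$ and parameters $\gamma_t>0$; it draws indices $i_1,i_2,\dots$ independently with $\mathbb{P}(i_t=j)=p_j$, at step $t\ge1$ queries the oracle $h_f(x_{t-1},i_t,\gamma_t)=[f_{i_t}(x_{t-1}),\nabla f_{i_t}(x_{t-1}),\mathrm{prox}^{\gamma_t}_{f_{i_t}}(x_{t-1})]$, and outputs an iterate $x_t\in\mathrm{span}\{x_0,\dots,x_{t-1},\nabla f_{i_1}(x_0),\dots,\nabla f_{i_t}(x_{t-1}),\mathrm{prox}^{\gamma_1}_{f_{i_1}}(x_0),\dots,\mathrm{prox}^{\gamma_t}_{f_{i_t}}(x_{t-1})\}$ (the choice within the span may depend on all previously observed information). Iterate $x_t$ uses $t$ oracle queries. *)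

theory Defs
  imports "HOL-Analysis.Analysis"
begin

text \<open>Vectors of R^d are represented as functions nat => real vanishing outside {..<d}.
  Indices of the component functions run over {..<n} (0-based).\<close>

type_synonym vec = "nat \<Rightarrow> real"

definition Rd :: "nat \<Rightarrow> vec set" where
  "Rd d = {x. \<forall>j\<ge>d. x j = 0}"

definition inner_d :: "nat \<Rightarrow> vec \<Rightarrow> vec \<Rightarrow> real" where
  "inner_d d x y = (\<Sum>j<d. x j * y j)"

definition norm_d :: "nat \<Rightarrow> vec \<Rightarrow> real" where
  "norm_d d x = sqrt (\<Sum>j<d. (x j)\<^sup>2)"

definition vadd :: "vec \<Rightarrow> vec \<Rightarrow> vec" where
  "vadd x y = (\<lambda>j. x j + y j)"

definition vsub :: "vec \<Rightarrow> vec \<Rightarrow> vec" where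
  "vsub x y = (\<lambda>j. x j - y j)"

definition vscale :: "real \<Rightarrow> vec \<Rightarrow> vec" where
  "vscale a x = (\<lambda>j. a * x j)"

definition vspan :: "vec set \<Rightarrow> vec set" where
  "vspan S = {v. \<exists>T a. finite T \<and> T \<subseteq> S \<and> v = (\<lambda>j. \<Sum>u\<in>T. a u * u j)}"

definition is_grad :: "nat \<Rightarrow> (vec \<Rightarrow> real) \<Rightarrow> vec \<Rightarrow> vec \<Rightarrow> bool" where
  "is_grad d f x g \<longleftrightarrow> g \<in> Rd d \<and>
     (\<forall>e>0. \<exists>\<delta>>0. \<forall>h\<in>Rd d. norm_d d h < \<delta> \<longrightarrow>
        \<bar>f (vadd x h) - f x - inner_d d g h\<bar> \<le> e * norm_d d h)"

definition grad :: "nat \<Rightarrow> (vec \<Rightarrow> real) \<Rightarrow> vec \<Rightarrow> vec" where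
  "grad d f x = (THE g. is_grad d f x g)"

definition differentiable_d :: "nat \<Rightarrow> (vec \<Rightarrow> real) \<Rightarrow> bool" where
  "differentiable_d d f \<longleftrightarrow> (\<forall>x\<in>Rd d. \<exists>g. is_grad d f x g)"

definition L_smooth :: "nat \<Rightarrow> real \<Rightarrow> (vec \<Rightarrow> real) \<Rightarrow> bool" where
  "L_smooth d L f \<longleftrightarrow> differentiable_d d f \<and>
     (\<forall>x\<in>Rd d. \<forall>y\<in>Rd d.
        norm_d d (vsub (grad d f x) (grad d f y)) \<le> L * norm_d d (vsub x y))"

definition convex_d :: "nat \<Rightarrow> (vec \<Rightarrow> real) \<Rightarrow> bool" where
  "convex_d d f \<longleftrightarrow> (\<forall>x\<in>Rd d. \<forall>y\<in>Rd d. \<forall>\<theta>::real. 0 \<le> \<theta> \<and> \<theta> \<le> 1 \<longrightarrow>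
      f (vadd (vscale \<theta> x) (vscale (1 - \<theta>) y)) \<le> \<theta> * f x + (1 - \<theta>) * f y)"

definition prox :: "nat \<Rightarrow> real \<Rightarrow> (vec \<Rightarrow> real) \<Rightarrow> vec \<Rightarrow> vec" where
  "prox d \<gamma> f x = (THE u. u \<in> Rd d \<and>
      (\<forall>v\<in>Rd d. f u + (norm_d d (vsub x u))\<^sup>2 / (2 * \<gamma>)
                 \<le> f v + (norm_d d (vsub x v))\<^sup>2 / (2 * \<gamma>)))"

definition is_minimizer :: "nat \<Rightarrow> (vec \<Rightarrow> real) \<Rightarrow> vec \<Rightarrow> bool" where
  "is_minimizer d f xs \<longleftrightarrow> xs \<in> Rd d \<and> (\<forall>y\<in>Rd d. f xs \<le> f y)"

text \<open>An observation of the oracle at step k: (i_k, f_{i_k}(x_{k-1}), grad f_{i_k}(x_{k-1}),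
  prox^{gamma_k}_{f_{i_k}}(x_{k-1})).\<close>
type_synonym obs = "nat \<times> real \<times> vec \<times> vec"

text \<open>A PIFO algorithm (for every input dimension d) consists of a probability vector
  p d over {..<n}, parameters gam d t > 0 (t >= 1), and a rule alg d mapping the observed
  history to the next iterate; x_t = alg d (history of length t), in particular x_0 = alg d [].\<close>
definition pifo_alg :: "nat \<Rightarrow> (nat \<Rightarrow> nat \<Rightarrow> real) \<Rightarrow> (nat \<Rightarrow> nat \<Rightarrow> real)
     \<Rightarrow> (nat \<Rightarrow> obs list \<Rightarrow> vec) \<Rightarrow> bool" where
  "pifo_alg n p gam alg \<longleftrightarrow>
     (\<forall>d. (\<forall>j<n. 0 \<le> p d j) \<and> (\<Sum>j<n. p d j) = 1 \<and> (\<forall>t\<ge>1. 0 < gam d t) \<and>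
          alg d [] \<in> Rd d \<and>
          (\<forall>h. h \<noteq> [] \<longrightarrow>
             alg d h \<in> vspan ({alg d (take k h) | k. k < length h}
                              \<union> {fst (snd (snd (h ! k))) | k. k < length h}
                              \<union> {snd (snd (snd (h ! k))) | k. k < length h})))"

definition hist_step :: "nat \<Rightarrow> (nat \<Rightarrow> vec \<Rightarrow> real) \<Rightarrow> (nat \<Rightarrow> nat \<Rightarrow> real)
     \<Rightarrow> (nat \<Rightarrow> obs list \<Rightarrow> vec) \<Rightarrow> obs list \<Rightarrow> nat \<Rightarrow> obs list" where
  "hist_step d F gam alg h i =
     (let x = alg d h; t = Suc (length h)
      in h @ [(i, F i x, grad d (F i) x, prox d (gam d t) (F i) x)])"

definition run_hist :: "nat \<Rightarrow> (nat \<Rightarrow> vec \<Rightarrow> real) \<Rightarrow> (nat \<Rightarrow> nat \<Rightarrow> real)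
     \<Rightarrow> (nat \<Rightarrow> obs list \<Rightarrow> vec) \<Rightarrow> nat list \<Rightarrow> obs list" where
  "run_hist d F gam alg s = foldl (hist_step d F gam alg) [] s"

definition iterate :: "nat \<Rightarrow> (nat \<Rightarrow> vec \<Rightarrow> real) \<Rightarrow> (nat \<Rightarrow> nat \<Rightarrow> real)
     \<Rightarrow> (nat \<Rightarrow> obs list \<Rightarrow> vec) \<Rightarrow> nat list \<Rightarrow> vec" where
  "iterate d F gam alg s = alg d (run_hist d F gam alg s)"

definition expect_iter :: "nat \<Rightarrow> nat \<Rightarrow> (nat \<Rightarrow> nat \<Rightarrow> real) \<Rightarrow> (nat \<Rightarrow> vec \<Rightarrow> real)
     \<Rightarrow> (nat \<Rightarrow> nat \<Rightarrow> real) \<Rightarrow> (nat \<Rightarrow> obs list \<Rightarrow> vec) \<Rightarrow> (vec \<Rightarrow> real) \<Rightarrow> nat \<Rightarrow> real" where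
  "expect_iter n d p F gam alg g t =
     (\<Sum>s\<in>{s. length s = t \<and> set s \<subseteq> {..<n}}.
        (\<Prod>k<t. p d (s ! k)) * g (iterate d F gam alg s))"

definition avg_fun :: "nat \<Rightarrow> (nat \<Rightarrow> vec \<Rightarrow> real) \<Rightarrow> vec \<Rightarrow> real" where
  "avg_fun n F x = (\<Sum>i<n. F i x) / real n"

end

theory Submission
  imports Defs "HOL-Analysis.Analysis"
begin


lemma inner_d_sym: "inner_d d x y = inner_d d y x"
  unfolding inner_d_def by (simp add: mult.commute)

lemma inner_d_sum_left:
  "inner_d d (\<lambda>j. \<Sum>r\<in>T. c r * v r j) y = (\<Sum>r\<in>T. c r * inner_d d (v r) y)"
  unfolding inner_d_def
  by (simp add: sum_distrib_left sum_distrib_right mult.assoc sum.swap[of _ T])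

lemma inner_d_sum_right:
  "inner_d d y (\<lambda>j. \<Sum>r\<in>T. c r * v r j) = (\<Sum>r\<in>T. c r * inner_d d y (v r))"
  by (subst inner_d_sym, subst inner_d_sum_left) (simp add: inner_d_sym)

lemma inner_d_add_left: "inner_d d (\<lambda>j. x j + y j) z = inner_d d x z + inner_d d y z"
  unfolding inner_d_def by (simp add: distrib_right sum.distrib)
lemma inner_d_diff_left: "inner_d d (\<lambda>j. x j - y j) z = inner_d d x z - inner_d d y z"
  unfolding inner_d_def by (simp add: left_diff_distrib sum_subtractf)
lemma inner_d_scale_left: "inner_d d (\<lambda>j. a * x j) z = a * inner_d d x z"
  unfolding inner_d_def by (simp add: sum_distrib_left mult.assoc)
lemma inner_d_add_right: "inner_d d z (\<lambda>j. x j + y j) = inner_d d z x + inner_d d z y"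
  unfolding inner_d_def by (simp add: distrib_left sum.distrib)
lemma inner_d_diff_right: "inner_d d z (\<lambda>j. x j - y j) = inner_d d z x - inner_d d z y"
  unfolding inner_d_def by (simp add: right_diff_distrib sum_subtractf)
lemma inner_d_scale_right: "inner_d d z (\<lambda>j. a * x j) = a * inner_d d z x"
  unfolding inner_d_def by (simp add: sum_distrib_left mult.left_commute)

lemma inner_d_self_nonneg: "inner_d d x x \<ge> 0"
  unfolding inner_d_def by (simp add: sum_nonneg)

lemma norm_d_nonneg: "norm_d d x \<ge> 0"
  unfolding norm_d_def by (simp add: sum_nonneg)

lemma norm_d_sq: "(norm_d d x)\<^sup>2 = inner_d d x x"
proof -
  have "0 \<le> (\<Sum>j<d. (x j)\<^sup>2)" by (rule sum_nonneg) simp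
  thus ?thesis unfolding norm_d_def inner_d_def by (simp add: power2_eq_square)
qed

lemma norm_d_inner: "norm_d d x = sqrt (inner_d d x x)"
  by (metis norm_d_nonneg norm_d_sq real_sqrt_unique)


lemma inner_self_zero:
  assumes "inner_d d x x = 0" "j < d" shows "x j = 0"
proof -
  have "(\<Sum>j<d. x j * x j) = 0" using assms(1) unfolding inner_d_def .
  hence "\<forall>i\<in>{..<d}. x i * x i = 0"
    by (subst sum_nonneg_eq_0_iff[symmetric]) auto
  thus ?thesis using assms(2) by auto
qed

lemma inner_self_zero_any:
  assumes "inner_d d x x = 0" shows "inner_d d x y = 0"
  using inner_self_zero[OF assms] unfolding inner_d_def by simp

lemma Rd_eq_of_inner:
  assumes "x \<in> Rd d" "y \<in> Rd d" "inner_d d (\<lambda>j. x j - y j) (\<lambda>j. x j - y j) = 0"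
  shows "x = y"
proof
  fix j show "x j = y j"
  proof (cases "j < d")
    case True thus ?thesis using inner_self_zero[OF assms(3) True] by simp
  next
    case False thus ?thesis using assms(1,2) unfolding Rd_def by auto
  qed
qed

lemma cauchy_d: "\<bar>inner_d d x y\<bar> \<le> norm_d d x * norm_d d y"
proof -
  have "\<bar>inner_d d x y\<bar> \<le> (\<Sum>j<d. \<bar>x j\<bar> * \<bar>y j\<bar>)"
    unfolding inner_d_def by (rule order_trans[OF sum_abs]) (simp add: abs_mult)
  also have "\<dots> \<le> L2_set x {..<d} * L2_set y {..<d}" by (rule L2_set_mult_ineq)
  finally show ?thesis unfolding norm_d_def L2_set_def by simp
qed

lemma Rd_sum: "(\<And>r. r \<in> T \<Longrightarrow> v r \<in> Rd d) \<Longrightarrow> (\<lambda>j. \<Sum>r\<in>T. c r * v r j) \<in> Rd d"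
  unfolding Rd_def by auto

lemma Rd_diff: "x \<in> Rd d \<Longrightarrow> y \<in> Rd d \<Longrightarrow> (\<lambda>j. x j - y j) \<in> Rd d"
  unfolding Rd_def by auto
lemma Rd_add: "x \<in> Rd d \<Longrightarrow> y \<in> Rd d \<Longrightarrow> (\<lambda>j. x j + y j) \<in> Rd d"
  unfolding Rd_def by auto
lemma Rd_scale: "x \<in> Rd d \<Longrightarrow> (\<lambda>j. a * x j) \<in> Rd d"
  unfolding Rd_def by auto


definition qf :: "nat \<Rightarrow> real \<Rightarrow> nat set \<Rightarrow> (nat \<Rightarrow> vec) \<Rightarrow> (nat \<Rightarrow> real) \<Rightarrow> vec \<Rightarrow> real" where
  "qf d lam R a b x = lam / 2 * (\<Sum>r\<in>R. (inner_d d (a r) x - b r)\<^sup>2)"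

definition qg :: "nat \<Rightarrow> real \<Rightarrow> nat set \<Rightarrow> (nat \<Rightarrow> vec) \<Rightarrow> (nat \<Rightarrow> real) \<Rightarrow> vec \<Rightarrow> vec" where
  "qg d lam R a b x = (\<lambda>j. \<Sum>r\<in>R. (lam * (inner_d d (a r) x - b r)) * a r j)"

definition qc :: "nat \<Rightarrow> real \<Rightarrow> (nat \<Rightarrow> vec) \<Rightarrow> (nat \<Rightarrow> real) \<Rightarrow> real \<Rightarrow> vec \<Rightarrow> nat \<Rightarrow> real" where
  "qc d lam a b \<gamma> x r = lam * \<gamma> * (inner_d d (a r) x - b r) / (1 + lam * \<gamma> * inner_d d (a r) (a r))"

definition qp :: "nat \<Rightarrow> real \<Rightarrow> nat set \<Rightarrow> (nat \<Rightarrow> vec) \<Rightarrow> (nat \<Rightarrow> real) \<Rightarrow> real \<Rightarrow> vec \<Rightarrow> vec" where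
  "qp d lam R a b \<gamma> x = (\<lambda>j. x j - (\<Sum>r\<in>R. qc d lam a b \<gamma> x r * a r j))"

definition ofam :: "nat \<Rightarrow> nat set \<Rightarrow> (nat \<Rightarrow> vec) \<Rightarrow> real \<Rightarrow> bool" where
  "ofam d R a \<beta> \<longleftrightarrow> finite R \<and> \<beta> \<ge> 0 \<and> (\<forall>r\<in>R. a r \<in> Rd d \<and> inner_d d (a r) (a r) \<le> \<beta>) \<and>
     (\<forall>r\<in>R. \<forall>s\<in>R. r \<noteq> s \<longrightarrow> inner_d d (a r) (a s) = 0)"

lemma qf_expand:
  "qf d lam R a b (\<lambda>j. x j + h j) = qf d lam R a b x + inner_d d (qg d lam R a b x) h
     + lam / 2 * (\<Sum>r\<in>R. (inner_d d (a r) h)\<^sup>2)"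
proof -
  have "(\<Sum>r\<in>R. (inner_d d (a r) (\<lambda>j. x j + h j) - b r)\<^sup>2)
      = (\<Sum>r\<in>R. (inner_d d (a r) x - b r)\<^sup>2 + 2 * ((inner_d d (a r) x - b r) * inner_d d (a r) h)
           + (inner_d d (a r) h)\<^sup>2)"
    by (rule sum.cong) (auto simp: inner_d_add_right power2_eq_square algebra_simps)
  also have "\<dots> = (\<Sum>r\<in>R. (inner_d d (a r) x - b r)\<^sup>2) + 2 * (\<Sum>r\<in>R. (inner_d d (a r) x - b r) * inner_d d (a r) h)
           + (\<Sum>r\<in>R. (inner_d d (a r) h)\<^sup>2)"
    by (simp add: sum.distrib sum_distrib_left)
  finally have e: "(\<Sum>r\<in>R. (inner_d d (a r) (\<lambda>j. x j + h j) - b r)\<^sup>2) = \<dots>" .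
  have g: "inner_d d (qg d lam R a b x) h = lam * (\<Sum>r\<in>R. (inner_d d (a r) x - b r) * inner_d d (a r) h)"
    unfolding qg_def inner_d_sum_left by (simp add: sum_distrib_left mult.assoc)
  show ?thesis unfolding qf_def e g by (simp add: algebra_simps)
qed

lemma orth_norm:
  assumes "ofam d R a \<beta>"
  shows "inner_d d (\<lambda>j. \<Sum>r\<in>R. c r * a r j) (\<lambda>j. \<Sum>r\<in>R. c r * a r j) = (\<Sum>r\<in>R. (c r)\<^sup>2 * inner_d d (a r) (a r))"
proof -
  have fin: "finite R" using assms unfolding ofam_def by auto
  have inner: "(\<Sum>s\<in>R. c s * inner_d d (a r) (a s)) = c r * inner_d d (a r) (a r)" if r: "r \<in> R" for r
  proof -
    have "(\<Sum>s\<in>R. c s * inner_d d (a r) (a s)) = c r * inner_d d (a r) (a r) + (\<Sum>s\<in>R - {r}. c s * inner_d d (a r) (a s))"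
      using fin r by (simp add: sum.remove)
    also have "(\<Sum>s\<in>R - {r}. c s * inner_d d (a r) (a s)) = 0"
      using assms r unfolding ofam_def by (intro sum.neutral) auto
    finally show ?thesis by simp
  qed
  show ?thesis
    by (simp add: inner_d_sum_left inner_d_sum_right inner power2_eq_square mult.assoc cong: sum.cong)
qed

lemma bessel:
  assumes "ofam d R a \<beta>"
  shows "(\<Sum>r\<in>R. (inner_d d (a r) h)\<^sup>2) \<le> \<beta> * inner_d d h h"
proof -
  define w where "w r = inner_d d (a r) h / inner_d d (a r) (a r)" for r
  define P where "P = (\<lambda>j. \<Sum>r\<in>R. w r * a r j)"
  define S where "S = (\<Sum>r\<in>R. (inner_d d (a r) h)\<^sup>2 / inner_d d (a r) (a r))"
  have hP: "inner_d d h P = S"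
    unfolding P_def S_def inner_d_sum_right
    by (simp add: w_def inner_d_sym[of d h] power2_eq_square)
  have PP: "inner_d d P P = S"
    unfolding P_def S_def orth_norm[OF assms]
  proof (rule sum.cong)
    fix r assume "r \<in> R"
    show "(w r)\<^sup>2 * inner_d d (a r) (a r) = (inner_d d (a r) h)\<^sup>2 / inner_d d (a r) (a r)"
      unfolding w_def by (cases "inner_d d (a r) (a r) = 0") (simp_all add: power2_eq_square)
  qed simp
  have "0 \<le> inner_d d (\<lambda>j. h j - P j) (\<lambda>j. h j - P j)" by (rule inner_d_self_nonneg)
  also have "\<dots> = inner_d d h h - 2 * inner_d d h P + inner_d d P P"
    by (simp add: inner_d_diff_left inner_d_diff_right inner_d_sym[of d P h])
  finally have SS: "S \<le> inner_d d h h" using hP PP by simp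
  have "(\<Sum>r\<in>R. (inner_d d (a r) h)\<^sup>2) \<le> (\<Sum>r\<in>R. \<beta> * ((inner_d d (a r) h)\<^sup>2 / inner_d d (a r) (a r)))"
  proof (rule sum_mono)
    fix r assume r: "r \<in> R"
    show "(inner_d d (a r) h)\<^sup>2 \<le> \<beta> * ((inner_d d (a r) h)\<^sup>2 / inner_d d (a r) (a r))"
    proof (cases "inner_d d (a r) (a r) = 0")
      case True thus ?thesis using inner_self_zero_any[OF True] by simp
    next
      case False
      have pos: "inner_d d (a r) (a r) > 0" using False inner_d_self_nonneg[of d "a r"] by simp
      have le: "inner_d d (a r) (a r) \<le> \<beta>" using assms r unfolding ofam_def by auto
      have "(inner_d d (a r) h)\<^sup>2 = inner_d d (a r) (a r) * ((inner_d d (a r) h)\<^sup>2 / inner_d d (a r) (a r))"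
        using pos by simp
      also have "\<dots> \<le> \<beta> * ((inner_d d (a r) h)\<^sup>2 / inner_d d (a r) (a r))"
        using le pos by (intro mult_right_mono) auto
      finally show ?thesis .
    qed
  qed
  also have "\<dots> = \<beta> * S" unfolding S_def by (simp add: sum_distrib_left)
  also have "\<dots> \<le> \<beta> * inner_d d h h" using SS assms unfolding ofam_def by (simp add: mult_left_mono)
  finally show ?thesis .
qed


lemma norm_d_scale: "norm_d d (\<lambda>j. s * w j) = \<bar>s\<bar> * norm_d d w"
proof -
  have "norm_d d (\<lambda>j. s * w j) = sqrt (s\<^sup>2 * inner_d d w w)"
    unfolding norm_d_inner by (simp add: inner_d_scale_left inner_d_scale_right power2_eq_square mult.assoc)
  also have "\<dots> = \<bar>s\<bar> * norm_d d w" by (simp add: real_sqrt_mult norm_d_inner)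
  finally show ?thesis .
qed

lemma is_grad_unique:
  assumes g1: "is_grad d f x g1" and g2: "is_grad d f x g2"
  shows "g1 = g2"
proof (rule ccontr)
  assume ne: "g1 \<noteq> g2"
  define w where "w = (\<lambda>j. g1 j - g2 j)"
  have R1: "g1 \<in> Rd d" and R2: "g2 \<in> Rd d" using g1 g2 unfolding is_grad_def by auto
  define N where "N = inner_d d w w"
  have Npos: "N > 0"
  proof -
    have "N \<noteq> 0" using Rd_eq_of_inner[OF R1 R2] ne unfolding N_def w_def by auto
    thus ?thesis using inner_d_self_nonneg[of d w] unfolding N_def by simp
  qed
  have nw: "norm_d d w = sqrt N" unfolding N_def norm_d_inner ..
  define e where "e = sqrt N / 4"
  have epos: "e > 0" using Npos unfolding e_def by simp
  obtain \<delta>1 where d1: "\<delta>1 > 0" and H1: "\<And>h. h \<in> Rd d \<Longrightarrow> norm_d d h < \<delta>1 \<Longrightarrow>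
        \<bar>f (vadd x h) - f x - inner_d d g1 h\<bar> \<le> e * norm_d d h"
    using g1 epos unfolding is_grad_def by blast
  obtain \<delta>2 where d2: "\<delta>2 > 0" and H2: "\<And>h. h \<in> Rd d \<Longrightarrow> norm_d d h < \<delta>2 \<Longrightarrow>
        \<bar>f (vadd x h) - f x - inner_d d g2 h\<bar> \<le> e * norm_d d h"
    using g2 epos unfolding is_grad_def by blast
  define s where "s = min \<delta>1 \<delta>2 / (2 * (sqrt N + 1))"
  have spos: "s > 0" using d1 d2 Npos unfolding s_def
    by (intro divide_pos_pos) (auto simp: add_nonneg_pos)
  define h where "h = (\<lambda>j. s * w j)"
  have hR: "h \<in> Rd d" unfolding h_def w_def by (rule Rd_scale[OF Rd_diff[OF R1 R2]])
  have nh: "norm_d d h = s * sqrt N" unfolding h_def norm_d_scale nw using spos by simp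
  have "s * sqrt N < min \<delta>1 \<delta>2"
  proof -
    have "s * sqrt N = min \<delta>1 \<delta>2 * (sqrt N / (2 * (sqrt N + 1)))" unfolding s_def by simp
    also have "\<dots> < min \<delta>1 \<delta>2 * 1"
    proof (intro mult_strict_left_mono)
      have "0 \<le> sqrt N" using Npos by simp
      thus "sqrt N / (2 * (sqrt N + 1)) < 1" by (simp add: divide_less_eq; linarith)
    qed (use d1 d2 in auto)
    finally show ?thesis by simp
  qed
  hence lt1: "norm_d d h < \<delta>1" and lt2: "norm_d d h < \<delta>2" using nh by auto
  have A: "\<bar>inner_d d w h\<bar> \<le> 2 * e * norm_d d h"
  proof -
    have "inner_d d w h = (f (vadd x h) - f x - inner_d d g2 h) - (f (vadd x h) - f x - inner_d d g1 h)"
      unfolding w_def by (simp add: inner_d_diff_left)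
    thus ?thesis using H1[OF hR lt1] H2[OF hR lt2] by linarith
  qed
  have "inner_d d w h = s * N" unfolding h_def N_def by (simp add: inner_d_scale_right)
  hence "s * N \<le> 2 * e * (s * sqrt N)" using A nh spos Npos by simp
  hence "N \<le> 2 * e * sqrt N" using spos by simp
  also have "\<dots> = N / 2" unfolding e_def using Npos by (simp add: power2_eq_square[symmetric])
  finally show False using Npos by simp
qed

lemma grad_eq: "is_grad d f x g \<Longrightarrow> grad d f x = g"
  unfolding grad_def using is_grad_unique by blast

lemma qg_Rd: "ofam d R a \<beta> \<Longrightarrow> qg d lam R a b x \<in> Rd d"
  unfolding qg_def ofam_def by (rule Rd_sum) auto

lemma qf_is_grad:
  assumes fam: "ofam d R a \<beta>" and lam: "lam \<ge> 0"
  shows "is_grad d (qf d lam R a b) x (qg d lam R a b x)"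
  unfolding is_grad_def
proof (intro conjI allI impI)
  show "qg d lam R a b x \<in> Rd d" by (rule qg_Rd[OF fam])
  fix e :: real assume e: "e > 0"
  have b0: "\<beta> \<ge> 0" using fam unfolding ofam_def by auto
  define K where "K = lam * \<beta> / 2 + 1"
  have "lam * \<beta> \<ge> 0" using lam b0 by simp
  hence K: "K > 0" "lam / 2 * \<beta> \<le> K" unfolding K_def by auto
  show "\<exists>\<delta>>0. \<forall>h\<in>Rd d. norm_d d h < \<delta> \<longrightarrow>
          \<bar>qf d lam R a b (vadd x h) - qf d lam R a b x - inner_d d (qg d lam R a b x) h\<bar> \<le> e * norm_d d h"
  proof (intro exI conjI ballI impI)
    show "e / K > 0" using e K by simp
    fix h assume hR: "h \<in> Rd d" and hn: "norm_d d h < e / K"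
    have "\<bar>qf d lam R a b (vadd x h) - qf d lam R a b x - inner_d d (qg d lam R a b x) h\<bar>
          = lam / 2 * (\<Sum>r\<in>R. (inner_d d (a r) h)\<^sup>2)"
      unfolding vadd_def qf_expand using lam by (simp add: sum_nonneg)
    also have "\<dots> \<le> lam / 2 * (\<beta> * inner_d d h h)"
      using bessel[OF fam] lam by (intro mult_left_mono) auto
    also have "\<dots> = (lam / 2 * \<beta>) * (norm_d d h * norm_d d h)"
    proof -
    have "inner_d d h h = norm_d d h * norm_d d h" using norm_d_sq[of d h] by (simp add: power2_eq_square)
    thus ?thesis by simp
  qed
    also have "\<dots> \<le> K * (norm_d d h * norm_d d h)"
      using K by (intro mult_right_mono) (auto simp: norm_d_nonneg)
    also have "\<dots> \<le> K * ((e / K) * norm_d d h)"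
      using hn K norm_d_nonneg[of d h] by (intro mult_left_mono mult_right_mono) auto
    also have "\<dots> = e * norm_d d h" using K by simp
    finally show "\<bar>qf d lam R a b (vadd x h) - qf d lam R a b x - inner_d d (qg d lam R a b x) h\<bar> \<le> e * norm_d d h" .
  qed
qed

lemma qf_grad: "ofam d R a \<beta> \<Longrightarrow> lam \<ge> 0 \<Longrightarrow> grad d (qf d lam R a b) x = qg d lam R a b x"
  by (rule grad_eq[OF qf_is_grad])

lemma qf_smooth:
  assumes fam: "ofam d R a \<beta>" and lam: "lam \<ge> 0" and Lge: "lam * \<beta> \<le> L"
  shows "L_smooth d L (qf d lam R a b)"
  unfolding L_smooth_def differentiable_d_def
proof (intro conjI ballI)
  fix x assume "x \<in> Rd d"
  show "\<exists>g. is_grad d (qf d lam R a b) x g" using qf_is_grad[OF fam lam] by blast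
next
  fix x y assume "x \<in> Rd d" "y \<in> Rd d"
  have b0: "\<beta> \<ge> 0" using fam unfolding ofam_def by auto
  define h where "h = vsub x y"
  have eq: "vsub (grad d (qf d lam R a b) x) (grad d (qf d lam R a b) y)
          = (\<lambda>j. \<Sum>r\<in>R. (lam * inner_d d (a r) h) * a r j)"
    unfolding qf_grad[OF fam lam] qg_def vsub_def h_def
    by (auto simp: sum_subtractf[symmetric] inner_d_diff_right algebra_simps intro!: sum.cong)
  have "(norm_d d (vsub (grad d (qf d lam R a b) x) (grad d (qf d lam R a b) y)))\<^sup>2
        = (\<Sum>r\<in>R. (lam * inner_d d (a r) h)\<^sup>2 * inner_d d (a r) (a r))"
    unfolding eq norm_d_sq orth_norm[OF fam] ..
  also have "\<dots> \<le> (\<Sum>r\<in>R. (lam * inner_d d (a r) h)\<^sup>2 * \<beta>)"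
    using fam unfolding ofam_def by (intro sum_mono mult_left_mono) auto
  also have "\<dots> = lam\<^sup>2 * \<beta> * (\<Sum>r\<in>R. (inner_d d (a r) h)\<^sup>2)"
    by (simp add: sum_distrib_left power_mult_distrib algebra_simps)
  also have "\<dots> \<le> lam\<^sup>2 * \<beta> * (\<beta> * inner_d d h h)"
    using bessel[OF fam] b0 by (intro mult_left_mono) auto
  also have "\<dots> = (lam * \<beta> * norm_d d h)\<^sup>2"
    by (simp only: power_mult_distrib norm_d_sq) (simp add: power2_eq_square)
  also have "\<dots> \<le> (L * norm_d d h)\<^sup>2"
    using Lge lam b0 norm_d_nonneg[of d h]
    by (intro power_mono mult_right_mono) auto
  finally show "norm_d d (vsub (grad d (qf d lam R a b) x) (grad d (qf d lam R a b) y)) \<le> L * norm_d d (vsub x y)"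
    unfolding h_def
  proof (rule power2_le_imp_le)
    have "0 \<le> lam * \<beta>" using lam b0 by simp
    thus "0 \<le> L * norm_d d (vsub x y)" using Lge norm_d_nonneg[of d "vsub x y"] by simp
  qed
qed

lemma sq_convex: fixes \<theta> p q :: real shows "0 \<le> \<theta> \<Longrightarrow> \<theta> \<le> 1 \<Longrightarrow> (\<theta> * p + (1 - \<theta>) * q)\<^sup>2 \<le> \<theta> * p\<^sup>2 + (1 - \<theta>) * q\<^sup>2"
proof -
  assume "0 \<le> \<theta>" "\<theta> \<le> 1"
  hence "0 \<le> \<theta> * (1 - \<theta>) * (p - q)\<^sup>2" by (intro mult_nonneg_nonneg) auto
  moreover have "\<theta> * p\<^sup>2 + (1 - \<theta>) * q\<^sup>2 - (\<theta> * p + (1 - \<theta>) * q)\<^sup>2 = \<theta> * (1 - \<theta>) * (p - q)\<^sup>2"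
    by (simp add: power2_eq_square algebra_simps)
  ultimately show ?thesis by linarith
qed

lemma qf_convex:
  assumes lam: "lam \<ge> 0"
  shows "convex_d d (qf d lam R a b)"
  unfolding convex_d_def
proof (intro ballI allI impI)
  fix x y \<theta> assume "x \<in> Rd d" "y \<in> Rd d" and th: "0 \<le> \<theta> \<and> \<theta> \<le> (1::real)"
  have "(\<Sum>r\<in>R. (inner_d d (a r) (vadd (vscale \<theta> x) (vscale (1 - \<theta>) y)) - b r)\<^sup>2)
     \<le> (\<Sum>r\<in>R. \<theta> * (inner_d d (a r) x - b r)\<^sup>2 + (1 - \<theta>) * (inner_d d (a r) y - b r)\<^sup>2)"
  proof (rule sum_mono)
    fix r
    have "inner_d d (a r) (vadd (vscale \<theta> x) (vscale (1 - \<theta>) y)) - b r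
        = \<theta> * (inner_d d (a r) x - b r) + (1 - \<theta>) * (inner_d d (a r) y - b r)"
      unfolding vadd_def vscale_def inner_d_add_right inner_d_scale_right by (simp add: algebra_simps)
    thus "(inner_d d (a r) (vadd (vscale \<theta> x) (vscale (1 - \<theta>) y)) - b r)\<^sup>2
       \<le> \<theta> * (inner_d d (a r) x - b r)\<^sup>2 + (1 - \<theta>) * (inner_d d (a r) y - b r)\<^sup>2"
      using th by (simp only:) (rule sq_convex; simp)
  qed
  also have "\<dots> = \<theta> * (\<Sum>r\<in>R. (inner_d d (a r) x - b r)\<^sup>2) + (1 - \<theta>) * (\<Sum>r\<in>R. (inner_d d (a r) y - b r)\<^sup>2)"
    by (simp add: sum.distrib sum_distrib_left)
  finally have S: "(\<Sum>r\<in>R. (inner_d d (a r) (vadd (vscale \<theta> x) (vscale (1 - \<theta>) y)) - b r)\<^sup>2)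
     \<le> \<theta> * (\<Sum>r\<in>R. (inner_d d (a r) x - b r)\<^sup>2) + (1 - \<theta>) * (\<Sum>r\<in>R. (inner_d d (a r) y - b r)\<^sup>2)" .
  show "qf d lam R a b (vadd (vscale \<theta> x) (vscale (1 - \<theta>) y)) \<le> \<theta> * qf d lam R a b x + (1 - \<theta>) * qf d lam R a b y"
  proof -
    have m: "lam/2 * (\<Sum>r\<in>R. (inner_d d (a r) (vadd (vscale \<theta> x) (vscale (1 - \<theta>) y)) - b r)\<^sup>2)
     \<le> lam/2 * (\<theta> * (\<Sum>r\<in>R. (inner_d d (a r) x - b r)\<^sup>2) + (1 - \<theta>) * (\<Sum>r\<in>R. (inner_d d (a r) y - b r)\<^sup>2))"
      using mult_left_mono[OF S, of "lam/2"] lam by simp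
    have e: "lam/2 * (\<theta> * (\<Sum>r\<in>R. (inner_d d (a r) x - b r)\<^sup>2) + (1 - \<theta>) * (\<Sum>r\<in>R. (inner_d d (a r) y - b r)\<^sup>2))
       = \<theta> * (lam/2 * (\<Sum>r\<in>R. (inner_d d (a r) x - b r)\<^sup>2)) + (1 - \<theta>) * (lam/2 * (\<Sum>r\<in>R. (inner_d d (a r) y - b r)\<^sup>2))"
      by (simp only: algebra_simps)
    show ?thesis unfolding qf_def using m e by linarith
  qed
qed


lemma orth_pick:
  assumes fam: "ofam d R a \<beta>" and r: "r \<in> R"
  shows "(\<Sum>s\<in>R. c s * inner_d d (a r) (a s)) = c r * inner_d d (a r) (a r)"
proof -
  have fin: "finite R" using fam unfolding ofam_def by auto
  have "(\<Sum>s\<in>R. c s * inner_d d (a r) (a s)) = c r * inner_d d (a r) (a r) + (\<Sum>s\<in>R - {r}. c s * inner_d d (a r) (a s))"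
    using fin r by (simp add: sum.remove)
  also have "(\<Sum>s\<in>R - {r}. c s * inner_d d (a r) (a s)) = 0"
    using fam r unfolding ofam_def by (intro sum.neutral) auto
  finally show ?thesis by simp
qed

lemma qp_Rd: "ofam d R a \<beta> \<Longrightarrow> x \<in> Rd d \<Longrightarrow> qp d lam R a b \<gamma> x \<in> Rd d"
  unfolding qp_def by (rule Rd_diff, assumption, rule Rd_sum) (auto simp: ofam_def)

lemma coef_alg: fixes lam g p bb N :: real assumes D: "1 + lam*g*N > 0" and g: "g > 0"
  shows "lam*((p - (lam*g*(p - bb)/(1+lam*g*N))*N) - bb) = (1/g)*(lam*g*(p-bb)/(1+lam*g*N))"
proof -
  define D where "D = 1 + lam*g*N"
  have Dn: "D \<noteq> 0" using D unfolding D_def by simp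
  have "lam*((p - (lam*g*(p - bb)/D)*N) - bb) = lam*(p-bb)*(D - lam*g*N)/D"
    using Dn by (simp add: field_simps)
  also have "\<dots> = lam*(p-bb)/D" unfolding D_def by simp
  also have "\<dots> = (1/g)*(lam*g*(p-bb)/D)" using g by simp
  finally show ?thesis unfolding D_def .
qed

lemma qf_prox_ineq:
  fixes x :: vec and b :: "nat \<Rightarrow> real"
  assumes fam: "ofam d R a \<beta>" and lam: "lam \<ge> 0" and g: "\<gamma> > 0" and v: "v \<in> Rd d"
  defines "u \<equiv> qp d lam R a b \<gamma> x"
  shows "qf d lam R a b u + (norm_d d (vsub x u))\<^sup>2 / (2 * \<gamma>) + inner_d d (vsub v u) (vsub v u) / (2 * \<gamma>)
       \<le> qf d lam R a b v + (norm_d d (vsub x v))\<^sup>2 / (2 * \<gamma>)"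
proof -
  define c where "c = qc d lam a b \<gamma> x"
  have u_eq: "u = (\<lambda>j. x j - (\<Sum>r\<in>R. c r * a r j))" unfolding u_def qp_def c_def ..
  have au: "inner_d d (a r) u = inner_d d (a r) x - c r * inner_d d (a r) (a r)" if r: "r \<in> R" for r
    unfolding u_eq inner_d_diff_right inner_d_sum_right orth_pick[OF fam r] ..
  have coef: "lam * (inner_d d (a r) u - b r) = (1/\<gamma>) * c r" if r: "r \<in> R" for r
  proof -
    have N: "inner_d d (a r) (a r) \<ge> 0" by (rule inner_d_self_nonneg)
    have D: "1 + lam * \<gamma> * inner_d d (a r) (a r) > 0"
      using N lam g by (simp add: add_pos_nonneg)
    show ?thesis unfolding au[OF r] c_def qc_def by (rule coef_alg[OF D g])
  qed
  define w where "w = (\<lambda>j. x j - u j)"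
  have qgu: "qg d lam R a b u = (\<lambda>j. (1/\<gamma>) * w j)"
  proof
    fix j
    have "qg d lam R a b u j = (\<Sum>r\<in>R. ((1/\<gamma>) * c r) * a r j)"
      unfolding qg_def using coef by (auto intro!: sum.cong)
    also have "\<dots> = (1/\<gamma>) * w j" unfolding w_def u_eq by (simp add: sum_distrib_left mult.assoc)
    finally show "qg d lam R a b u j = (1/\<gamma>) * w j" .
  qed
  define h where "h = vsub v u"
  have v_eq: "v = (\<lambda>j. u j + h j)" unfolding h_def vsub_def by simp
  have "qf d lam R a b v = qf d lam R a b u + inner_d d (qg d lam R a b u) h + lam / 2 * (\<Sum>r\<in>R. (inner_d d (a r) h)\<^sup>2)"
    unfolding v_eq by (rule qf_expand)
  moreover have "lam / 2 * (\<Sum>r\<in>R. (inner_d d (a r) h)\<^sup>2) \<ge> 0" using lam by (simp add: sum_nonneg)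
  moreover have "inner_d d (qg d lam R a b u) h = inner_d d w h / \<gamma>"
    unfolding qgu inner_d_scale_left by simp
  ultimately have A: "qf d lam R a b v \<ge> qf d lam R a b u + inner_d d w h / \<gamma>" by linarith
  have xv: "vsub x v = (\<lambda>j. w j - h j)" unfolding vsub_def w_def v_eq by auto
  have B: "(norm_d d (vsub x v))\<^sup>2 = inner_d d w w - 2 * inner_d d w h + inner_d d h h"
    unfolding norm_d_sq xv inner_d_diff_left inner_d_diff_right by (simp add: inner_d_sym[of d h w])
  have C: "(norm_d d (vsub x u))\<^sup>2 = inner_d d w w" unfolding norm_d_sq w_def vsub_def ..
  have "inner_d d w h / \<gamma> + (inner_d d w w - 2 * inner_d d w h + inner_d d h h) / (2 * \<gamma>)
      = inner_d d w w / (2 * \<gamma>) + inner_d d h h / (2 * \<gamma>)"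
    using g by (simp add: field_simps)
  thus ?thesis using A unfolding B C h_def[symmetric] by linarith
qed

lemma qf_prox:
  assumes fam: "ofam d R a \<beta>" and lam: "lam \<ge> 0" and g: "\<gamma> > 0" and x: "x \<in> Rd d"
  shows "prox d \<gamma> (qf d lam R a b) x = qp d lam R a b \<gamma> x"
  unfolding prox_def
proof (rule the_equality)
  let ?u = "qp d lam R a b \<gamma> x"
  have uR: "?u \<in> Rd d" by (rule qp_Rd[OF fam x])
  have g2: "2 * \<gamma> > 0" using g by simp
  show "?u \<in> Rd d \<and> (\<forall>v\<in>Rd d. qf d lam R a b ?u + (norm_d d (vsub x ?u))\<^sup>2 / (2 * \<gamma>)
            \<le> qf d lam R a b v + (norm_d d (vsub x v))\<^sup>2 / (2 * \<gamma>))"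
  proof (intro conjI ballI uR)
    fix v assume v: "v \<in> Rd d"
    have "inner_d d (vsub v ?u) (vsub v ?u) / (2 * \<gamma>) \<ge> 0"
      using g2 inner_d_self_nonneg by simp
    thus "qf d lam R a b ?u + (norm_d d (vsub x ?u))\<^sup>2 / (2 * \<gamma>) \<le> qf d lam R a b v + (norm_d d (vsub x v))\<^sup>2 / (2 * \<gamma>)"
      using qf_prox_ineq[OF fam lam g v, where x=x and b=b] by linarith
  next
  qed
  fix u' assume H: "u' \<in> Rd d \<and> (\<forall>v\<in>Rd d. qf d lam R a b u' + (norm_d d (vsub x u'))\<^sup>2 / (2 * \<gamma>)
            \<le> qf d lam R a b v + (norm_d d (vsub x v))\<^sup>2 / (2 * \<gamma>))"
  hence u'R: "u' \<in> Rd d" by simp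
  have "qf d lam R a b u' + (norm_d d (vsub x u'))\<^sup>2 / (2 * \<gamma>) \<le> qf d lam R a b ?u + (norm_d d (vsub x ?u))\<^sup>2 / (2 * \<gamma>)"
    using H uR by blast
  hence "inner_d d (vsub u' ?u) (vsub u' ?u) / (2 * \<gamma>) \<le> 0"
    using qf_prox_ineq[OF fam lam g u'R, where x=x and b=b] by linarith
  hence "inner_d d (vsub u' ?u) (vsub u' ?u) \<le> 0" using g2 by (simp add: divide_le_0_iff)
  hence "inner_d d (\<lambda>j. u' j - ?u j) (\<lambda>j. u' j - ?u j) = 0"
    using inner_d_self_nonneg[of d "vsub u' ?u"] unfolding vsub_def by simp
  thus "u' = ?u" by (rule Rd_eq_of_inner[OF u'R uR])
qed


definition ub :: "vec \<Rightarrow> nat \<Rightarrow> vec" where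
  "ub x0 m = (if x0 (2*m) = 0 \<and> x0 (2*m+1) = 0 then (\<lambda>j. if j = 2*m then 1 else 0)
     else (\<lambda>j. if j = 2*m then - x0 (2*m+1) / sqrt ((x0 (2*m))\<^sup>2 + (x0 (2*m+1))\<^sup>2)
               else if j = 2*m+1 then x0 (2*m) / sqrt ((x0 (2*m))\<^sup>2 + (x0 (2*m+1))\<^sup>2) else 0))"

lemma ub_supp: "j \<noteq> 2*m \<Longrightarrow> j \<noteq> 2*m+1 \<Longrightarrow> ub x0 m j = 0"
  unfolding ub_def by auto

lemma inner_pair:
  assumes supp: "\<And>j. j \<noteq> 2*m \<Longrightarrow> j \<noteq> 2*m+1 \<Longrightarrow> v j = 0" and md: "2*m+1 < d"
  shows "inner_d d v y = v (2*m) * y (2*m) + v (2*m+1) * y (2*m+1)"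
proof -
  have "inner_d d v y = (\<Sum>j\<in>{2*m, 2*m+1}. v j * y j)"
    unfolding inner_d_def
    by (rule sum.mono_neutral_right) (use md supp in auto)
  thus ?thesis by simp
qed

lemma ub_Rd: "m < k \<Longrightarrow> ub x0 m \<in> Rd (2*k)"
  unfolding Rd_def using ub_supp[of _ m x0] by auto

lemma ub_norm: assumes "m < k" shows "inner_d (2*k) (ub x0 m) (ub x0 m) = 1"
proof -
  have md: "2*m+1 < 2*k" using assms by simp
  have e: "inner_d (2*k) (ub x0 m) (ub x0 m) = ub x0 m (2*m) * ub x0 m (2*m) + ub x0 m (2*m+1) * ub x0 m (2*m+1)"
    by (rule inner_pair[OF _ md]) (rule ub_supp)
  show ?thesis
  proof (cases "x0 (2*m) = 0 \<and> x0 (2*m+1) = 0")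
    case True thus ?thesis unfolding e by (simp add: ub_def)
  next
    case False
    define S where "S = (x0 (2*m))\<^sup>2 + (x0 (2*m+1))\<^sup>2"
    have Sp: "S > 0" using False unfolding S_def
      by (metis add_nonneg_pos add_pos_nonneg zero_less_power2 zero_le_power2 not_less_iff_gr_or_eq)
    have "ub x0 m (2*m) * ub x0 m (2*m) + ub x0 m (2*m+1) * ub x0 m (2*m+1)
       = ((x0 (2*m+1))\<^sup>2 + (x0 (2*m))\<^sup>2) / (sqrt S)\<^sup>2"
      unfolding ub_def S_def using False by (simp add: power2_eq_square add_divide_distrib)
    also have "\<dots> = 1" using Sp False unfolding S_def by (simp add: add.commute)
    finally show ?thesis unfolding e .
  qed
qed

lemma ub_orth: assumes "m < k" "m' < k" "m \<noteq> m'" shows "inner_d (2*k) (ub x0 m) (ub x0 m') = 0"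
proof -
  have md: "2*m+1 < 2*k" using assms by simp
  have "inner_d (2*k) (ub x0 m) (ub x0 m') = ub x0 m (2*m) * ub x0 m' (2*m) + ub x0 m (2*m+1) * ub x0 m' (2*m+1)"
    by (rule inner_pair[OF _ md]) (rule ub_supp)
  also have "ub x0 m' (2*m) = 0" using assms(3) by (intro ub_supp) auto
  also have "ub x0 m' (2*m+1) = 0" using assms(3) by (intro ub_supp) auto
  finally show ?thesis by simp
qed

lemma ub_x0: assumes "m < k" shows "inner_d (2*k) (ub x0 m) x0 = 0"
proof -
  have md: "2*m+1 < 2*k" using assms by simp
  have e: "inner_d (2*k) (ub x0 m) x0 = ub x0 m (2*m) * x0 (2*m) + ub x0 m (2*m+1) * x0 (2*m+1)"
    by (rule inner_pair[OF _ md]) (rule ub_supp)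
  show ?thesis unfolding e by (auto simp: ub_def field_simps)
qed

definition Vset :: "nat \<Rightarrow> nat \<Rightarrow> (nat \<Rightarrow> vec) \<Rightarrow> nat \<Rightarrow> vec set" where
  "Vset d k U j = {x \<in> Rd d. \<forall>m. j \<le> m \<longrightarrow> m < k \<longrightarrow> inner_d d (U m) x = 0}"

lemma Vset_mono: "j \<le> j' \<Longrightarrow> Vset d k U j \<subseteq> Vset d k U j'"
  unfolding Vset_def by auto

lemma Vset_Rd: "Vset d k U j \<subseteq> Rd d"
  unfolding Vset_def by auto

lemma Vset_lincomb:
  assumes "\<And>r. r \<in> T \<Longrightarrow> c r = 0 \<or> v r \<in> Vset d k U j"
  shows "(\<lambda>i. \<Sum>r\<in>T. c r * v r i) \<in> Vset d k U j"
  unfolding Vset_def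
proof (intro CollectI conjI allI impI)
  show "(\<lambda>i. \<Sum>r\<in>T. c r * v r i) \<in> Rd d"
    unfolding Rd_def
  proof (intro CollectI allI impI)
    fix i assume "d \<le> i"
    have "c r * v r i = 0" if "r \<in> T" for r
      using assms[OF that] \<open>d \<le> i\<close> unfolding Vset_def Rd_def by auto
    thus "(\<Sum>r\<in>T. c r * v r i) = 0" by (simp add: sum.neutral)
  qed
  fix m assume "j \<le> m" "m < k"
  have "c r * inner_d d (U m) (v r) = 0" if "r \<in> T" for r
    using assms[OF that] \<open>j \<le> m\<close> \<open>m < k\<close> unfolding Vset_def by auto
  thus "inner_d d (U m) (\<lambda>i. \<Sum>r\<in>T. c r * v r i) = 0"
    unfolding inner_d_sum_right by (simp add: sum.neutral)
qed

lemma Vset_diff: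
  assumes "x \<in> Vset d k U j" "y \<in> Vset d k U j"
  shows "(\<lambda>i. x i - y i) \<in> Vset d k U j"
  using assms unfolding Vset_def by (auto simp: Rd_diff inner_d_diff_right)

lemma Vset_span: "S \<subseteq> Vset d k U j \<Longrightarrow> vspan S \<subseteq> Vset d k U j"
  unfolding vspan_def
proof (intro subsetI, elim CollectE exE conjE)
  fix v T a assume "S \<subseteq> Vset d k U j" "finite T" "T \<subseteq> S" "v = (\<lambda>j. \<Sum>u\<in>T. a u * u j)"
  thus "v \<in> Vset d k U j" using Vset_lincomb[of T a "\<lambda>u. u" d k U j] by auto
qed

lemma q_Vset:
  assumes fam: "ofam d R a \<beta>" and x: "x \<in> Vset d k U j'"
    and links: "\<And>r. r \<in> R \<Longrightarrow> inner_d d (a r) x - b r = 0 \<or> a r \<in> Vset d k U j'"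
  shows "qg d lam R a b x \<in> Vset d k U j'" "qp d lam R a b \<gamma> x \<in> Vset d k U j'"
proof -
  show "qg d lam R a b x \<in> Vset d k U j'"
    unfolding qg_def by (rule Vset_lincomb) (use links in auto)
  show "qp d lam R a b \<gamma> x \<in> Vset d k U j'"
    unfolding qp_def
    by (rule Vset_diff[OF x], rule Vset_lincomb) (use links in \<open>auto simp: qc_def\<close>)
qed


definition cntD :: "nat set \<Rightarrow> nat list \<Rightarrow> nat" where
  "cntD D s = length (filter (\<lambda>i. i \<in> D) s)"

lemma cntD_snoc: "cntD D (s @ [i]) = cntD D s + (if i \<in> D then 1 else 0)"
  unfolding cntD_def by simp

lemma run_hist_snoc: "run_hist d F gam alg (s @ [i]) = hist_step d F gam alg (run_hist d F gam alg s) i"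
  unfolding run_hist_def by simp

lemma run_hist_len: "length (run_hist d F gam alg s) = length s"
  by (induction s rule: rev_induct) (auto simp: run_hist_snoc hist_step_def Let_def run_hist_def)

definition Inv :: "nat \<Rightarrow> (nat \<Rightarrow> obs list \<Rightarrow> vec) \<Rightarrow> vec set \<Rightarrow> obs list \<Rightarrow> bool" where
  "Inv d alg W h \<longleftrightarrow> (\<forall>k<length h. alg d (take k h) \<in> W \<and> fst (snd (snd (h ! k))) \<in> W
                                        \<and> snd (snd (snd (h ! k))) \<in> W)"

lemma run_inv:
  fixes V :: "nat \<Rightarrow> vec set"
  assumes gpos: "\<forall>t\<ge>1. 0 < gam d t"
    and span: "\<forall>h. h \<noteq> [] \<longrightarrow>
             alg d h \<in> vspan ({alg d (take k h) | k. k < length h}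
                              \<union> {fst (snd (snd (h ! k))) | k. k < length h}
                              \<union> {snd (snd (snd (h ! k))) | k. k < length h})"
    and V0: "alg d [] \<in> V 0"
    and Vmono: "\<And>j j'. j \<le> j' \<Longrightarrow> V j \<subseteq> V j'"
    and Vspan: "\<And>S j. S \<subseteq> V j \<Longrightarrow> vspan S \<subseteq> V j"
    and step: "\<And>i j x \<gamma>. i < n \<Longrightarrow> \<gamma> > 0 \<Longrightarrow> x \<in> V j \<Longrightarrow>
        grad d (F i) x \<in> V (j + (if i \<in> D then 1 else 0)) \<and> prox d \<gamma> (F i) x \<in> V (j + (if i \<in> D then 1 else 0))"
    and s: "set s \<subseteq> {..<n}"
  shows "iterate d F gam alg s \<in> V (cntD D s)"
proof -
  have A: "alg d h \<in> V J" if I: "Inv d alg (V J) h" for h J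
  proof (cases "h = []")
    case True thus ?thesis using V0 Vmono[of 0 J] by auto
  next
    case False
    have "({alg d (take k h) | k. k < length h}
                              \<union> {fst (snd (snd (h ! k))) | k. k < length h}
                              \<union> {snd (snd (snd (h ! k))) | k. k < length h}) \<subseteq> V J"
      using I unfolding Inv_def by auto
    thus ?thesis using span False Vspan by blast
  qed
  have B: "set s \<subseteq> {..<n} \<longrightarrow> Inv d alg (V (cntD D s)) (run_hist d F gam alg s)" for s
  proof (induction s rule: rev_induct)
    case Nil show ?case by (simp add: Inv_def run_hist_def)
  next
    case (snoc i s)
    show ?case
    proof
      assume si: "set (s @ [i]) \<subseteq> {..<n}"
      hence IH: "Inv d alg (V (cntD D s)) (run_hist d F gam alg s)" and i: "i < n" using snoc by auto
      define h where "h = run_hist d F gam alg s"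
      define J where "J = cntD D s"
      define J' where "J' = J + (if i \<in> D then 1 else 0)"
      define x where "x = alg d h"
      have x: "x \<in> V J" unfolding x_def using A IH unfolding h_def J_def by blast
      define g where "g = gam d (Suc (length h))"
      have g: "g > 0" unfolding g_def using gpos by simp
      have h': "run_hist d F gam alg (s @ [i]) = h @ [(i, F i x, grad d (F i) x, prox d g (F i) x)]"
        unfolding run_hist_snoc h_def[symmetric] hist_step_def Let_def x_def g_def ..
      have st: "grad d (F i) x \<in> V J'" "prox d g (F i) x \<in> V J'"
        using step[OF i g x] unfolding J'_def by auto
      have JJ: "V J \<subseteq> V J'" unfolding J'_def by (rule Vmono) simp
      have "Inv d alg (V J') (h @ [(i, F i x, grad d (F i) x, prox d g (F i) x)])"
        unfolding Inv_def
      proof (intro allI impI)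
        fix k assume k: "k < length (h @ [(i, F i x, grad d (F i) x, prox d g (F i) x)])"
        show "alg d (take k (h @ [(i, F i x, grad d (F i) x, prox d g (F i) x)])) \<in> V J' \<and>
          fst (snd (snd ((h @ [(i, F i x, grad d (F i) x, prox d g (F i) x)]) ! k))) \<in> V J' \<and>
          snd (snd (snd ((h @ [(i, F i x, grad d (F i) x, prox d g (F i) x)]) ! k))) \<in> V J'"
        proof (cases "k < length h")
          case True
          thus ?thesis using IH JJ unfolding Inv_def h_def[symmetric] J_def[symmetric]
            by (auto simp: nth_append)
        next
          case False
          hence "k = length h" using k by simp
          thus ?thesis using x JJ st unfolding x_def by (auto simp: nth_append)
        qed
      qed
      thus "Inv d alg (V (cntD D (s @ [i]))) (run_hist d F gam alg (s @ [i]))"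
        unfolding h' cntD_snoc J'_def J_def .
    qed
  qed
  show ?thesis unfolding iterate_def using A B s by blast
qed


definition Ls :: "nat \<Rightarrow> nat \<Rightarrow> nat list set" where
  "Ls n t = {s. length s = t \<and> set s \<subseteq> {..<n}}"

lemma Ls_finite: "finite (Ls n t)"
proof -
  have "Ls n t = {xs. set xs \<subseteq> {..<n} \<and> length xs = t}" unfolding Ls_def by auto
  thus ?thesis using finite_lists_length_eq[of "{..<n}" t] by simp
qed

lemma Ls_Suc: "Ls n (Suc t) = (\<lambda>(i, s). i # s) ` ({..<n} \<times> Ls n t)"
proof
  show "Ls n (Suc t) \<subseteq> (\<lambda>(i, s). i # s) ` ({..<n} \<times> Ls n t)"
  proof
    fix s assume "s \<in> Ls n (Suc t)"
    then obtain i s' where "s = i # s'" "length s' = t" "i < n" "set s' \<subseteq> {..<n}"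
      unfolding Ls_def by (cases s) auto
    thus "s \<in> (\<lambda>(i, s). i # s) ` ({..<n} \<times> Ls n t)" unfolding Ls_def by force
  qed
qed (auto simp: Ls_def)

lemma sum_Ls_Suc: "(\<Sum>s\<in>Ls n (Suc t). g s) = (\<Sum>i<n. \<Sum>s\<in>Ls n t. g (i # s))"
proof -
  have inj: "inj_on (\<lambda>(i, s). i # s) ({..<n} \<times> Ls n t)" by (auto simp: inj_on_def)
  have "(\<Sum>s\<in>Ls n (Suc t). g s) = (\<Sum>x\<in>{..<n} \<times> Ls n t. g (case x of (i, s) \<Rightarrow> i # s))"
    unfolding Ls_Suc by (subst sum.reindex[OF inj]) (simp add: comp_def)
  also have "\<dots> = (\<Sum>i<n. \<Sum>s\<in>Ls n t. g (i # s))"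
    by (subst sum.cartesian_product) (simp add: split_def)
  finally show ?thesis .
qed

definition Pw :: "(nat \<Rightarrow> real) \<Rightarrow> nat list \<Rightarrow> real" where
  "Pw p s = (\<Prod>k<length s. p (s ! k))"

lemma Pw_Cons: "Pw p (i # s) = p i * Pw p s"
  unfolding Pw_def by (simp only: length_Cons prod.lessThan_Suc_shift) simp

lemma Pw_nonneg: "(\<forall>i<n. 0 \<le> p i) \<Longrightarrow> set s \<subseteq> {..<n} \<Longrightarrow> Pw p s \<ge> 0"
  unfolding Pw_def by (intro prod_nonneg) (auto simp: set_conv_nth subset_iff)

lemma Pw_sum: assumes "(\<Sum>i<n. p i) = 1" shows "(\<Sum>s\<in>Ls n t. Pw p s) = 1"
proof (induction t)
  case 0
  have "Ls n 0 = {[]}" unfolding Ls_def by auto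
  thus ?case by (simp add: Pw_def)
next
  case (Suc t)
  have "(\<Sum>s\<in>Ls n (Suc t). Pw p s) = (\<Sum>i<n. p i * (\<Sum>s\<in>Ls n t. Pw p s))"
    unfolding sum_Ls_Suc Pw_Cons by (simp add: sum_distrib_left)
  thus ?case using Suc assms by simp
qed

lemma cntD_Cons: "cntD D (i # s) = (if i \<in> D then 1 else 0) + cntD D s"
  unfolding cntD_def by simp

lemma Pw_cnt: assumes "(\<Sum>i<n. p i) = 1" and D: "D \<subseteq> {..<n}"
  shows "(\<Sum>s\<in>Ls n t. Pw p s * real (cntD D s)) = real t * (\<Sum>i\<in>D. p i)"
proof (induction t)
  case 0
  have "Ls n 0 = {[]}" unfolding Ls_def by auto
  thus ?case by (simp add: cntD_def)
next
  case (Suc t)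
  have "(\<Sum>s\<in>Ls n (Suc t). Pw p s * real (cntD D s))
     = (\<Sum>i<n. \<Sum>s\<in>Ls n t. p i * (if i \<in> D then 1 else 0) * Pw p s + p i * (Pw p s * real (cntD D s)))"
    unfolding sum_Ls_Suc Pw_Cons cntD_Cons by (intro sum.cong refl) (simp add: algebra_simps)
  also have "\<dots> = (\<Sum>i<n. p i * (if i \<in> D then 1 else 0) * (\<Sum>s\<in>Ls n t. Pw p s) + p i * (\<Sum>s\<in>Ls n t. Pw p s * real (cntD D s)))"
    by (simp add: sum.distrib sum_distrib_left)
  also have "\<dots> = (\<Sum>i<n. (if i \<in> D then p i else 0)) + (\<Sum>i<n. p i) * (real t * (\<Sum>i\<in>D. p i))"
  proof -
    have "(\<Sum>i<n. p i * (if i \<in> D then 1 else 0)) = (\<Sum>i<n. (if i \<in> D then p i else 0))"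
      by (intro sum.cong) auto
    thus ?thesis unfolding Pw_sum[OF assms(1)] Suc by (simp add: sum.distrib sum_distrib_right)
  qed
  also have "(\<Sum>i<n. (if i \<in> D then p i else 0)) = (\<Sum>i\<in>D. p i)"
    using D by (simp add: sum.If_cases Int_absorb1)
  finally show ?case using assms(1) by (simp add: algebra_simps)
qed

lemma expect_lower:
  assumes pn: "\<forall>i<n. 0 \<le> p i" and ps: "(\<Sum>i<n. p i) = 1" and D: "D \<subseteq> {..<n}"
    and Y0: "\<And>s. s \<in> Ls n t \<Longrightarrow> Y s \<ge> 0"
    and YG: "\<And>s. s \<in> Ls n t \<Longrightarrow> cntD D s < m \<Longrightarrow> Y s \<ge> G"
    and G: "G \<ge> 0" and m: "m > 0"
  shows "(\<Sum>s\<in>Ls n t. Pw p s * Y s) \<ge> G * (1 - real t * (\<Sum>i\<in>D. p i) / real m)"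
proof -
  have "(\<Sum>s\<in>Ls n t. Pw p s * (G - G / real m * real (cntD D s))) \<le> (\<Sum>s\<in>Ls n t. Pw p s * Y s)"
  proof (rule sum_mono)
    fix s assume s: "s \<in> Ls n t"
    have P: "Pw p s \<ge> 0" using Pw_nonneg[OF pn] s unfolding Ls_def by auto
    have "G - G / real m * real (cntD D s) \<le> Y s"
    proof (cases "cntD D s < m")
      case True
      have "G / real m * real (cntD D s) \<ge> 0" using G m by simp
      thus ?thesis using YG[OF s True] by linarith
    next
      case False
      have "G / real m * real (cntD D s) \<ge> G / real m * real m"
        using False G m by (intro mult_left_mono) auto
      hence "G - G / real m * real (cntD D s) \<le> 0" using m by simp
      thus ?thesis using Y0[OF s] by linarith
    qed
    thus "Pw p s * (G - G / real m * real (cntD D s)) \<le> Pw p s * Y s" using P by (rule mult_left_mono)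
  qed
  moreover have "(\<Sum>s\<in>Ls n t. Pw p s * (G - G / real m * real (cntD D s)))
      = G * (\<Sum>s\<in>Ls n t. Pw p s) - G / real m * (\<Sum>s\<in>Ls n t. Pw p s * real (cntD D s))"
    by (simp add: algebra_simps sum_subtractf sum_distrib_left)
  moreover have "\<dots> = G * (1 - real t * (\<Sum>i\<in>D. p i) / real m)"
    unfolding Pw_sum[OF ps] Pw_cnt[OF ps D] by (simp add: algebra_simps)
  ultimately show ?thesis by linarith
qed


lemma U_inner: "i < k \<Longrightarrow> j < k \<Longrightarrow> inner_d (2*k) (ub x0 i) (ub x0 j) = (if i = j then 1 else 0)"
  using ub_norm[of i k x0] ub_orth[of i k j x0] by auto

definition ca :: "vec \<Rightarrow> nat \<Rightarrow> vec" where
  "ca x0 r = (if r = 0 then ub x0 0 else (\<lambda>j. ub x0 (r-1) j - ub x0 r j))"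

definition cb :: "real \<Rightarrow> nat \<Rightarrow> real" where
  "cb \<alpha> r = (if r = 0 then \<alpha> else 0)"

lemma ca_Rd: "r < k \<Longrightarrow> ca x0 r \<in> Rd (2*k)"
  unfolding ca_def by (auto intro!: Rd_diff ub_Rd)

lemma ca_norm: assumes "r < k" shows "inner_d (2*k) (ca x0 r) (ca x0 r) \<le> 2"
proof (cases "r = 0")
  case True thus ?thesis using U_inner[of 0 k 0 x0] assms by (simp add: ca_def)
next
  case False
  thus ?thesis using assms
    by (simp add: ca_def inner_d_diff_left inner_d_diff_right U_inner)
qed

lemma ca_nonadj: assumes "r < k" "s < k" "r + 1 < s" shows "inner_d (2*k) (ca x0 r) (ca x0 s) = 0"
proof (cases "r = 0")
  case True thus ?thesis using assms
    by (simp add: ca_def inner_d_diff_left inner_d_diff_right U_inner)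
next
  case False thus ?thesis using assms
    by (simp add: ca_def inner_d_diff_left inner_d_diff_right U_inner; arith)
qed

lemma ofam_chain:
  assumes R: "R \<subseteq> {..<k}" and nonadj: "\<And>r s. r \<in> R \<Longrightarrow> s \<in> R \<Longrightarrow> r \<noteq> s \<Longrightarrow> r + 1 < s \<or> s + 1 < r"
  shows "ofam (2*k) R (ca x0) 2"
  unfolding ofam_def
proof (intro conjI ballI impI)
  show "finite R" using R finite_subset by blast
  fix r assume r: "r \<in> R"
  show "ca x0 r \<in> Rd (2*k)" using R r by (intro ca_Rd) auto
  show "inner_d (2*k) (ca x0 r) (ca x0 r) \<le> 2" using R r by (intro ca_norm) auto
  fix s assume s: "s \<in> R" and rs: "r \<noteq> s"
  show "inner_d (2*k) (ca x0 r) (ca x0 s) = 0"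
    using nonadj[OF r s rs]
  proof
    assume "r + 1 < s" thus ?thesis using R r s by (intro ca_nonadj) auto
  next
    assume "s + 1 < r" thus ?thesis using R r s ca_nonadj[of s k r x0] by (auto simp: inner_d_sym)
  qed
qed simp

lemma ofam_even: "ofam (2*k) {r. r < k \<and> even r} (ca x0) 2"
  by (rule ofam_chain) (auto, presburger+)

lemma ofam_odd: "ofam (2*k) {r. r < k \<and> odd r} (ca x0) 2"
  by (rule ofam_chain) (auto, presburger+)

lemma ub_Vset: assumes "m < k" "m + 1 \<le> j" shows "ub x0 m \<in> Vset (2*k) k (ub x0) j"
  unfolding Vset_def using assms by (auto simp: ub_Rd U_inner)

lemma link_cond:
  assumes x: "x \<in> Vset (2*k) k (ub x0) j" and r: "r < k"
  shows "inner_d (2*k) (ca x0 r) x - cb \<alpha> r = 0 \<or> ca x0 r \<in> Vset (2*k) k (ub x0) (j+1)"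
proof (cases "r = 0")
  case True
  hence "ca x0 r \<in> Vset (2*k) k (ub x0) (j+1)" unfolding ca_def Vset_def using r
    by (auto simp: ub_Rd U_inner)
  thus ?thesis by simp
next
  case False
  show ?thesis
  proof (cases "r \<le> j")
    case True
    have "ca x0 r \<in> Vset (2*k) k (ub x0) (j+1)" unfolding ca_def Vset_def using r False True
      by (auto simp: ub_Rd U_inner Rd_diff inner_d_diff_right)
    thus ?thesis by simp
  next
    case rj: False
    have "inner_d (2*k) (ub x0 (r-1)) x = 0" "inner_d (2*k) (ub x0 r) x = 0"
      using x r rj unfolding Vset_def by auto
    thus ?thesis using False unfolding ca_def cb_def
      by (simp add: inner_d_diff_left)
  qed
qed

lemma chain_lower:
  assumes k: "k \<ge> 1" and x: "x \<in> Vset (2*k) k (ub x0) (k-1)"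
  shows "\<alpha>\<^sup>2 \<le> real k * (\<Sum>r<k. (inner_d (2*k) (ca x0 r) x - cb \<alpha> r)\<^sup>2)"
proof -
  define y where "y m = inner_d (2*k) (ub x0 m) x" for m
  have yk: "y (k-1) = 0" using x k unfolding Vset_def y_def by auto
  define z where "z r = (if r = 0 then \<alpha> - y 0 else y (r-1) - y r)" for r
  have zl: "(z r)\<^sup>2 = (inner_d (2*k) (ca x0 r) x - cb \<alpha> r)\<^sup>2" for r
    unfolding z_def ca_def cb_def y_def by (cases "r = 0") (auto simp: inner_d_diff_left power2_commute)
  obtain k' where k': "k = Suc k'" using k by (cases k) auto
  have "(\<Sum>r<k. z r) = z 0 + (\<Sum>r<k'. z (Suc r))" unfolding k' by (rule sum.lessThan_Suc_shift)
  also have "(\<Sum>r<k'. z (Suc r)) = - (\<Sum>r<k'. y (Suc r) - y r)" unfolding z_def by (simp add: sum_negf[symmetric])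
  also have "(\<Sum>r<k'. y (Suc r) - y r) = y k' - y 0" by (rule sum_lessThan_telescope)
  finally have "(\<Sum>r<k. z r) = \<alpha>" using yk unfolding k' z_def by simp
  hence "\<alpha>\<^sup>2 \<le> (\<Sum>r<k. (z r)\<^sup>2) * card {..<k}" using sum_squared_le_sum_of_squares[of z "{..<k}"] by simp
  thus ?thesis unfolding zl by (simp add: mult.commute)
qed


lemma ofam_U: "ofam (2*k) {..<k} (ub x0) 1"
  unfolding ofam_def by (auto simp: ub_Rd U_inner)

lemma x0_Vset: "x0 \<in> Rd (2*k) \<Longrightarrow> x0 \<in> Vset (2*k) k (ub x0) 0"
  unfolding Vset_def by (auto simp: ub_x0)

lemma expect_iter_eq:
  "expect_iter n d p F gam alg g t = (\<Sum>s\<in>Ls n t. Pw (p d) s * g (iterate d F gam alg s))"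
  unfolding expect_iter_def Ls_def Pw_def by (intro sum.cong) auto

lemma sum_two: fixes n i0 i1 :: nat assumes "i0 < n" "i1 < n" "i0 \<noteq> i1"
  shows "(\<Sum>i<n. (if i = i0 then A else if i = i1 then B else 0::real)) = A + B"
proof -
  have "(\<Sum>i<n. (if i = i0 then A else if i = i1 then B else 0::real))
      = (\<Sum>i<n. (if i = i0 then A else 0)) + (\<Sum>i<n. (if i = i1 then B else 0))"
    using assms(3) by (subst sum.distrib[symmetric]) (rule sum.cong, auto)
  also have "(\<Sum>i<n. (if i = i0 then A else 0)) = A" using assms(1) by (simp add: sum.delta sum.delta')
  also have "(\<Sum>i<n. (if i = i1 then B else 0)) = B" using assms(2) by (simp add: sum.delta sum.delta')
  finally show ?thesis .
qed

lemma pifo_parts: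
  assumes "pifo_alg n p gam alg"
  shows "\<forall>t\<ge>1. 0 < gam d t" "alg d [] \<in> Rd d" "(\<forall>j<n. 0 \<le> p d j)" "(\<Sum>j<n. p d j) = 1"
    "\<forall>h. h \<noteq> [] \<longrightarrow>
             alg d h \<in> vspan ({alg d (take k h) | k. k < length h}
                              \<union> {fst (snd (snd (h ! k))) | k. k < length h}
                              \<union> {snd (snd (snd (h ! k))) | k. k < length h})"
  using assms unfolding pifo_alg_def by blast+

lemma chain_instance:
  fixes n k :: nat and L B :: real
  assumes pifo: "pifo_alg n p gam alg" and k: "k \<ge> 1" and L: "L > 0" and B: "B > 0"
    and i0: "i0 < n" and i1: "i1 < n" and i01: "i0 \<noteq> i1"
  defines "d \<equiv> 2*k"
  defines "x0 \<equiv> alg d []"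
  defines "\<alpha> \<equiv> B / sqrt (real k)"
  defines "lam \<equiv> L / 2"
  defines "F \<equiv> (\<lambda>i. if i = i0 then qf d lam {r. r < k \<and> even r} (ca x0) (cb \<alpha>)
                 else if i = i1 then qf d lam {r. r < k \<and> odd r} (ca x0) (cb \<alpha>)
                 else qf d lam {} (ca x0) (cb \<alpha>))"
  defines "xs \<equiv> (\<lambda>j. x0 j + (\<Sum>m<k. \<alpha> * ub x0 m j))"
  shows "(\<forall>i<n. L_smooth d L (F i) \<and> convex_d d (F i)) \<and> is_minimizer d (avg_fun n F) xs
     \<and> norm_d d (vsub x0 xs) \<le> B
     \<and> (\<forall>t. expect_iter n d p F gam alg (avg_fun n F) t - avg_fun n F xs
            \<ge> (L * B\<^sup>2 / (4 * real n * (real k)\<^sup>2)) * (1 - real t * (p d i0 + p d i1) / real k))"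
proof -
  have n0: "n > 0" using i0 by simp
  have lam: "lam \<ge> 0" "lam * 2 \<le> L" using L unfolding lam_def by auto
  have famA: "ofam d {r. r < k \<and> even r} (ca x0) 2" unfolding d_def by (rule ofam_even)
  have famB: "ofam d {r. r < k \<and> odd r} (ca x0) 2" unfolding d_def by (rule ofam_odd)
  have famE: "ofam d {} (ca x0) 2" unfolding d_def by (rule ofam_chain) auto
  have famF: "\<And>i. \<exists>R. ofam d R (ca x0) 2 \<and> F i = qf d lam R (ca x0) (cb \<alpha>) \<and>
       (\<forall>r\<in>R. r < k) \<and> (i \<notin> {i0, i1} \<longrightarrow> R = {})"
  proof -
    fix i show "\<exists>R. ofam d R (ca x0) 2 \<and> F i = qf d lam R (ca x0) (cb \<alpha>) \<and>
       (\<forall>r\<in>R. r < k) \<and> (i \<notin> {i0, i1} \<longrightarrow> R = {})"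
    proof (cases "i = i0")
      case True thus ?thesis using famA unfolding F_def by (intro exI[of _ "{r. r < k \<and> even r}"]) (auto simp: i01)
    next
      case False
      show ?thesis
      proof (cases "i = i1")
        case True thus ?thesis using famB False unfolding F_def by (intro exI[of _ "{r. r < k \<and> odd r}"]) auto
      next
        case False2: False
        thus ?thesis using famE False unfolding F_def by (intro exI[of _ "{}"]) auto
      qed
    qed
  qed
  have SC: "\<forall>i<n. L_smooth d L (F i) \<and> convex_d d (F i)"
  proof (intro allI impI conjI)
    fix i
    obtain R where R: "ofam d R (ca x0) 2" "F i = qf d lam R (ca x0) (cb \<alpha>)" using famF by blast
    show "L_smooth d L (F i)" unfolding R(2) by (rule qf_smooth[OF R(1) lam])
    show "convex_d d (F i)" unfolding R(2) by (rule qf_convex[OF lam(1)])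
  qed
  define cfun where "cfun x = (\<Sum>r<k. (inner_d d (ca x0 r) x - cb \<alpha> r)\<^sup>2)" for x
  have avg: "avg_fun n F x = lam / 2 * cfun x / real n" for x
  proof -
    have "(\<Sum>i<n. F i x) = qf d lam {r. r < k \<and> even r} (ca x0) (cb \<alpha>) x + qf d lam {r. r < k \<and> odd r} (ca x0) (cb \<alpha>) x"
    proof -
      have "(\<Sum>i<n. F i x) = (\<Sum>i<n. (if i = i0 then qf d lam {r. r < k \<and> even r} (ca x0) (cb \<alpha>) x
                 else if i = i1 then qf d lam {r. r < k \<and> odd r} (ca x0) (cb \<alpha>) x else 0))"
        unfolding F_def by (rule sum.cong) (auto simp: qf_def)
      thus ?thesis using sum_two[OF i0 i1 i01] by simp
    qed
    also have "\<dots> = lam / 2 * cfun x"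
    proof -
      have u: "{..<k} = {r. r < k \<and> even r} \<union> {r. r < k \<and> odd r}" by auto
      have "cfun x = (\<Sum>r\<in>{r. r < k \<and> even r}. (inner_d d (ca x0 r) x - cb \<alpha> r)\<^sup>2) + (\<Sum>r\<in>{r. r < k \<and> odd r}. (inner_d d (ca x0 r) x - cb \<alpha> r)\<^sup>2)"
        unfolding cfun_def by (subst u, rule sum.union_disjoint) auto
      thus ?thesis unfolding qf_def by (simp add: algebra_simps)
    qed
    finally have e: "(\<Sum>i<n. F i x) = lam / 2 * cfun x" .
    show ?thesis unfolding avg_fun_def e ..
  qed
  have cfun0: "cfun x \<ge> 0" for x unfolding cfun_def by (simp add: sum_nonneg)
  have x0R: "x0 \<in> Rd d" using pifo_parts(2)[OF pifo] unfolding x0_def .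
  have Uin: "inner_d d (ub x0 m) xs = \<alpha>" if m: "m < k" for m
  proof -
    have "inner_d d (ub x0 m) xs = inner_d d (ub x0 m) x0 + (\<Sum>m'<k. \<alpha> * inner_d d (ub x0 m) (ub x0 m'))"
      unfolding xs_def inner_d_add_right inner_d_sum_right ..
    also have "inner_d d (ub x0 m) x0 = 0" unfolding d_def using m by (rule ub_x0)
    also have "(\<Sum>m'<k. \<alpha> * inner_d d (ub x0 m) (ub x0 m')) = \<alpha>"
    proof -
      have "(\<Sum>m'<k. \<alpha> * inner_d d (ub x0 m) (ub x0 m')) = (\<Sum>m'<k. (if m = m' then \<alpha> else 0))"
        unfolding d_def by (rule sum.cong) (auto simp: U_inner m)
      also have "\<dots> = \<alpha>" using m by (simp add: sum.delta sum.delta')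
      finally show ?thesis .
    qed
    finally show ?thesis by simp
  qed
  have cxs: "cfun xs = 0" unfolding cfun_def
    by (rule sum.neutral) (auto simp: ca_def cb_def inner_d_diff_left Uin)
  have xsR: "xs \<in> Rd d" unfolding xs_def d_def
    by (rule Rd_add[OF x0R[unfolded d_def]], rule Rd_sum) (auto simp: ub_Rd)
  have fxs: "avg_fun n F xs = 0" unfolding avg cxs by simp
  have favg0: "avg_fun n F x \<ge> 0" for x unfolding avg using lam cfun0[of x] by simp
  have MIN: "is_minimizer d (avg_fun n F) xs" unfolding is_minimizer_def using xsR fxs favg0 by simp
  have NORM: "norm_d d (vsub x0 xs) \<le> B"
  proof -
    have e: "vsub x0 xs = (\<lambda>j. \<Sum>m<k. (- \<alpha>) * ub x0 m j)" unfolding vsub_def xs_def by (simp add: sum_negf)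
    have "(norm_d d (vsub x0 xs))\<^sup>2 = (\<Sum>m<k. (- \<alpha>)\<^sup>2 * inner_d d (ub x0 m) (ub x0 m))"
      unfolding norm_d_sq e d_def by (rule orth_norm[OF ofam_U])
    also have "\<dots> = (\<Sum>m<k. \<alpha>\<^sup>2)"
      unfolding d_def by (rule sum.cong) (auto simp: U_inner)
    also have "\<dots> = real k * \<alpha>\<^sup>2" by simp
    also have "\<dots> = B\<^sup>2" unfolding \<alpha>_def using k by (simp add: power_divide)
    finally have "(norm_d d (vsub x0 xs))\<^sup>2 = B\<^sup>2" .
    thus ?thesis using B norm_d_nonneg[of d "vsub x0 xs"] by (simp add: power2_eq_iff)
  qed
  have EXP: "expect_iter n d p F gam alg (avg_fun n F) t - avg_fun n F xs
            \<ge> (L * B\<^sup>2 / (4 * real n * (real k)\<^sup>2)) * (1 - real t * (p d i0 + p d i1) / real k)" for t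
  proof -
    define V where "V = Vset d k (ub x0)"
    have inv: "iterate d F gam alg s \<in> V (cntD {i0, i1} s)" if s: "set s \<subseteq> {..<n}" for s
    proof (rule run_inv[where V = V and n = n, OF pifo_parts(1)[OF pifo] pifo_parts(5)[OF pifo] _ _ _ _ s])
      have "x0 \<in> Vset d k (ub x0) 0" unfolding d_def by (rule x0_Vset) (use x0R in \<open>simp add: d_def\<close>)
      thus "alg d [] \<in> V 0" unfolding V_def x0_def .
      show "V j \<subseteq> V j'" if "j \<le> j'" for j j' using that unfolding V_def by (rule Vset_mono)
      show "vspan S \<subseteq> V j" if "S \<subseteq> V j" for S j using that unfolding V_def by (rule Vset_span)
      fix i j x \<gamma> assume i: "i < n" and g: "0 < (\<gamma>::real)" and x: "x \<in> V j"
      obtain R where R: "ofam d R (ca x0) 2" "F i = qf d lam R (ca x0) (cb \<alpha>)" "\<forall>r\<in>R. r < k"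
        "i \<notin> {i0, i1} \<longrightarrow> R = {}" using famF by blast
      have xR: "x \<in> Rd d" using x Vset_Rd unfolding V_def by blast
      define j' where "j' = j + (if i \<in> {i0, i1} then 1 else 0)"
      have xj': "x \<in> Vset d k (ub x0) j'" using x Vset_mono[of j j' d k "ub x0"] unfolding V_def j'_def by auto
      have links: "inner_d d (ca x0 r) x - cb \<alpha> r = 0 \<or> ca x0 r \<in> Vset d k (ub x0) j'" if r: "r \<in> R" for r
      proof -
        have "i \<in> {i0, i1}" using R(4) r by auto
        hence jj: "j' = j + 1" unfolding j'_def by simp
        show ?thesis unfolding jj d_def
          by (rule link_cond) (use x R(3) r in \<open>auto simp: V_def d_def\<close>)
      qed
      show "grad d (F i) x \<in> V (j + (if i \<in> {i0, i1} then 1 else 0)) \<and>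
            prox d \<gamma> (F i) x \<in> V (j + (if i \<in> {i0, i1} then 1 else 0))"
        unfolding R(2) qf_grad[OF R(1) lam(1)] qf_prox[OF R(1) lam(1) g xR] V_def j'_def[symmetric]
        using q_Vset[OF R(1) xj' links] by blast
    qed
    have D: "{i0, i1} \<subseteq> {..<n}" using i0 i1 by auto
    have G0: "L * B\<^sup>2 / (4 * real n * (real k)\<^sup>2) \<ge> 0" using L by simp
    have "(\<Sum>s\<in>Ls n t. Pw (p d) s * avg_fun n F (iterate d F gam alg s))
        \<ge> (L * B\<^sup>2 / (4 * real n * (real k)\<^sup>2)) * (1 - real t * (\<Sum>i\<in>{i0, i1}. p d i) / real k)"
    proof (rule expect_lower[OF pifo_parts(3)[OF pifo] pifo_parts(4)[OF pifo] D _ _ G0])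
      show "k > 0" using k by simp
      fix s assume s: "s \<in> Ls n t"
      show "avg_fun n F (iterate d F gam alg s) \<ge> 0" by (rule favg0)
      assume cnt: "cntD {i0, i1} s < k"
      have "iterate d F gam alg s \<in> V (cntD {i0, i1} s)" using inv s unfolding Ls_def by blast
      hence xi: "iterate d F gam alg s \<in> Vset (2*k) k (ub x0) (k-1)"
      proof -
        have "cntD {i0, i1} s \<le> k - 1" using cnt by simp
        from Vset_mono[OF this, of "2*k" k "ub x0"] show ?thesis
          using \<open>iterate d F gam alg s \<in> V (cntD {i0, i1} s)\<close> unfolding V_def d_def by blast
      qed
      have "\<alpha>\<^sup>2 \<le> real k * cfun (iterate d F gam alg s)"
        unfolding cfun_def d_def by (rule chain_lower[OF k xi[unfolded d_def]])
      hence "\<alpha>\<^sup>2 / real k \<le> cfun (iterate d F gam alg s)" using k by (simp add: divide_le_eq mult.commute)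
      moreover have "\<alpha>\<^sup>2 / real k = B\<^sup>2 / (real k)\<^sup>2" unfolding \<alpha>_def using k
        by (simp add: power_divide power2_eq_square)
      ultimately have c: "B\<^sup>2 / (real k)\<^sup>2 \<le> cfun (iterate d F gam alg s)" by simp
      have "L * B\<^sup>2 / (4 * real n * (real k)\<^sup>2) = (L / 4 / real n) * (B\<^sup>2 / (real k)\<^sup>2)" by simp
      also have "\<dots> \<le> (L / 4 / real n) * cfun (iterate d F gam alg s)"
        using c L n0 by (intro mult_left_mono) auto
      also have "\<dots> = avg_fun n F (iterate d F gam alg s)" unfolding avg lam_def by simp
      finally show "avg_fun n F (iterate d F gam alg s) \<ge> L * B\<^sup>2 / (4 * real n * (real k)\<^sup>2)" .
    qed
    thus ?thesis unfolding expect_iter_eq fxs using i01 by simp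
  qed
  show ?thesis using SC MIN NORM EXP by blast
qed


lemma sum_one: fixes n i0 :: nat assumes "i0 < n"
  shows "(\<Sum>i<n. (if i = i0 then A else Bv::real)) = A + (real n - 1) * Bv"
proof -
  have "(\<Sum>i<n. (if i = i0 then A else Bv::real)) = (\<Sum>i<n. (if i = i0 then A - Bv else 0) + Bv)"
    by (rule sum.cong) auto
  also have "\<dots> = (A - Bv) + real n * Bv" using assms by (simp add: sum.distrib sum.delta)
  finally show ?thesis by (simp add: algebra_simps)
qed

lemma omega_instance:
  fixes n :: nat and L B :: real
  assumes pifo: "pifo_alg n p gam alg" and n2: "n \<ge> 2" and L: "L > 0" and B: "B > 0"
    and i0: "i0 < n"
  defines "x0 \<equiv> alg 2 []"
  defines "a \<equiv> (\<lambda>r::nat. ub x0 0)"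
  defines "F \<equiv> (\<lambda>i. if i = i0 then qf 2 L {0} a (\<lambda>_. real n * B) else qf 2 L {0} a (\<lambda>_. 0))"
  defines "xs \<equiv> (\<lambda>j. x0 j + B * ub x0 0 j)"
  shows "(\<forall>i<n. L_smooth 2 L (F i) \<and> convex_d 2 (F i)) \<and> is_minimizer 2 (avg_fun n F) xs
     \<and> norm_d 2 (vsub x0 xs) \<le> B
     \<and> (\<forall>t. expect_iter n 2 p F gam alg (avg_fun n F) t - avg_fun n F xs
            \<ge> (L * B\<^sup>2 / 2) * (1 - real t * p 2 i0))"
proof -
  have n0: "real n > 0" using n2 by simp
  have U0R: "ub x0 0 \<in> Rd 2" using ub_Rd[of 0 1 x0] by simp
  have U00: "inner_d 2 (ub x0 0) (ub x0 0) = 1" using ub_norm[of 0 1 x0] by simp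
  have fam: "ofam 2 {0} a 1" unfolding ofam_def a_def using U0R U00 by auto
  have L0: "L \<ge> 0" using L by simp
  have famF: "\<And>i. \<exists>bb. F i = qf 2 L {0} a bb \<and> (i \<noteq> i0 \<longrightarrow> bb = (\<lambda>_. 0))"
    unfolding F_def by auto
  have SC: "\<forall>i<n. L_smooth 2 L (F i) \<and> convex_d 2 (F i)"
  proof (intro allI impI conjI)
    fix i obtain bb where e: "F i = qf 2 L {0} a bb" using famF by blast
    show "L_smooth 2 L (F i)" unfolding e by (rule qf_smooth[OF fam L0]) simp
    show "convex_d 2 (F i)" unfolding e by (rule qf_convex[OF L0])
  qed
  define y where "y x = inner_d 2 (ub x0 0) x" for x
  have avg: "avg_fun n F x = L / 2 * (y x - B)\<^sup>2 + L / 2 * (real n - 1) * B\<^sup>2" for x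
  proof -
    have "(\<Sum>i<n. F i x) = (\<Sum>i<n. (if i = i0 then L / 2 * (y x - real n * B)\<^sup>2 else L / 2 * (y x)\<^sup>2))"
      unfolding F_def by (rule sum.cong) (auto simp: qf_def a_def y_def)
    also have "\<dots> = L / 2 * (y x - real n * B)\<^sup>2 + (real n - 1) * (L / 2 * (y x)\<^sup>2)"
      by (rule sum_one[OF i0])
    finally have e: "(\<Sum>i<n. F i x) = \<dots>" .
    have "(L / 2 * (y x - real n * B)\<^sup>2 + (real n - 1) * (L / 2 * (y x)\<^sup>2)) / real n
        = L / 2 * (y x - B)\<^sup>2 + L / 2 * (real n - 1) * B\<^sup>2"
      using n0 by (simp add: field_simps power2_eq_square)
    thus ?thesis unfolding avg_fun_def e .
  qed
  have x0R: "x0 \<in> Rd 2" using pifo_parts(2)[OF pifo] unfolding x0_def .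
  have yx0: "y x0 = 0" unfolding y_def using ub_x0[of 0 1 x0] by simp
  have yxs: "y xs = B" unfolding y_def xs_def inner_d_add_right inner_d_scale_right
    using yx0 U00 unfolding y_def by simp
  have xsR: "xs \<in> Rd 2" unfolding xs_def by (rule Rd_add[OF x0R Rd_scale[OF U0R]])
  have MIN: "is_minimizer 2 (avg_fun n F) xs" unfolding is_minimizer_def
    using xsR L0 by (auto simp: avg yxs)
  have NORM: "norm_d 2 (vsub x0 xs) \<le> B"
  proof -
    have "vsub x0 xs = (\<lambda>j. (- B) * ub x0 0 j)" unfolding vsub_def xs_def by simp
    hence "norm_d 2 (vsub x0 xs) = \<bar>- B\<bar> * norm_d 2 (ub x0 0)" by (simp only: norm_d_scale)
    also have "norm_d 2 (ub x0 0) = 1" unfolding norm_d_inner U00 by simp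
    finally show ?thesis using B by simp
  qed
  have EXP: "expect_iter n 2 p F gam alg (avg_fun n F) t - avg_fun n F xs
            \<ge> (L * B\<^sup>2 / 2) * (1 - real t * p 2 i0)" for t
  proof -
    define V where "V = Vset (2*1) 1 (ub x0)"
    have inv: "iterate 2 F gam alg s \<in> V (cntD {i0} s)" if s: "set s \<subseteq> {..<n}" for s
    proof (rule run_inv[where V = V and n = n, OF pifo_parts(1)[OF pifo] pifo_parts(5)[OF pifo] _ _ _ _ s])
      have "x0 \<in> Vset (2*1) 1 (ub x0) 0" by (rule x0_Vset) (use x0R in simp)
      thus "alg 2 [] \<in> V 0" unfolding V_def x0_def by simp
      show "V j \<subseteq> V j'" if "j \<le> j'" for j j' using that unfolding V_def by (rule Vset_mono)
      show "vspan S \<subseteq> V j" if "S \<subseteq> V j" for S j using that unfolding V_def by (rule Vset_span)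
      fix i j x \<gamma> assume i: "i < n" and g: "0 < (\<gamma>::real)" and x: "x \<in> V j"
      obtain bb where e: "F i = qf 2 L {0} a bb" and bb: "i \<noteq> i0 \<longrightarrow> bb = (\<lambda>_. 0)" using famF by blast
      have xR: "x \<in> Rd 2" using x Vset_Rd unfolding V_def by fastforce
      define j' where "j' = j + (if i \<in> {i0} then 1 else 0)"
      have xj': "x \<in> Vset 2 1 (ub x0) j'" using x Vset_mono[of j j' "2*1" 1 "ub x0"] unfolding V_def j'_def by auto
      have links: "inner_d 2 (a r) x - bb r = 0 \<or> a r \<in> Vset 2 1 (ub x0) j'" if r: "r \<in> {0}" for r
      proof (cases "j' = 0")
        case True
        hence "i \<noteq> i0" "j = 0" unfolding j'_def by (auto split: if_splits)
        hence "bb r = 0" "inner_d 2 (ub x0 0) x = 0" using bb x unfolding V_def Vset_def by auto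
        thus ?thesis unfolding a_def by simp
      next
        case False
        have "a r \<in> Vset (2*1) 1 (ub x0) j'" unfolding a_def by (rule ub_Vset) (use False in auto)
        thus ?thesis by simp
      qed
      show "grad 2 (F i) x \<in> V (j + (if i \<in> {i0} then 1 else 0)) \<and>
            prox 2 \<gamma> (F i) x \<in> V (j + (if i \<in> {i0} then 1 else 0))"
        unfolding e qf_grad[OF fam L0] qf_prox[OF fam L0 g xR] V_def j'_def[symmetric]
        using q_Vset[OF fam xj' links] by simp
    qed
    have D: "{i0} \<subseteq> {..<n}" using i0 by auto
    have G0: "L * B\<^sup>2 / 2 \<ge> 0" using L by simp
    have "(\<Sum>s\<in>Ls n t. Pw (p 2) s * (avg_fun n F (iterate 2 F gam alg s) - avg_fun n F xs))
        \<ge> (L * B\<^sup>2 / 2) * (1 - real t * (\<Sum>i\<in>{i0}. p 2 i) / real (1::nat))"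
    proof (rule expect_lower[OF pifo_parts(3)[OF pifo] pifo_parts(4)[OF pifo] D _ _ G0])
      show "(1::nat) > 0" by simp
      fix s assume s: "s \<in> Ls n t"
      show "avg_fun n F (iterate 2 F gam alg s) - avg_fun n F xs \<ge> 0" using L0 by (simp add: avg yxs)
      assume cnt: "cntD {i0} s < 1"
      have "iterate 2 F gam alg s \<in> V (cntD {i0} s)" using inv s unfolding Ls_def by blast
      hence "y (iterate 2 F gam alg s) = 0" using cnt unfolding V_def Vset_def y_def by auto
      thus "avg_fun n F (iterate 2 F gam alg s) - avg_fun n F xs \<ge> L * B\<^sup>2 / 2"
        by (simp add: avg yxs)
    qed
    moreover have "(\<Sum>s\<in>Ls n t. Pw (p 2) s * (avg_fun n F (iterate 2 F gam alg s) - avg_fun n F xs))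
        = expect_iter n 2 p F gam alg (avg_fun n F) t - avg_fun n F xs"
      unfolding expect_iter_eq using Pw_sum[OF pifo_parts(4)[OF pifo, where d=2], where t=t]
      by (simp add: right_diff_distrib sum_subtractf sum_distrib_right[symmetric])
    ultimately show ?thesis by simp
  qed
  show ?thesis using SC MIN NORM EXP by blast
qed


lemma exists_small:
  fixes n :: nat and q :: "nat \<Rightarrow> real"
  assumes n: "n > 0" and s: "(\<Sum>i<n. q i) = c"
  shows "\<exists>i<n. q i \<le> c / real n"
proof (rule ccontr)
  assume "\<not> ?thesis"
  hence "\<forall>i\<in>{..<n}. c / real n < q i" by auto
  hence "(\<Sum>i<n. c / real n) < (\<Sum>i<n. q i)" using n by (intro sum_strict_mono) auto
  thus False using n s by simp
qed

lemma exists_pair: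
  fixes n :: nat and q :: "nat \<Rightarrow> real"
  assumes n: "n \<ge> 2" and s: "(\<Sum>i<n. q i) = 1"
  shows "\<exists>i0 i1. i0 < n \<and> i1 < n \<and> i0 \<noteq> i1 \<and> q i0 + q i1 \<le> 2 / real n"
proof -
  obtain m where m: "n = Suc m" using n by (cases n) auto
  have "(\<Sum>i<n. q (Suc i mod n)) = (\<Sum>i<m. q (Suc i mod n)) + q (Suc m mod n)" unfolding m by simp
  also have "(\<Sum>i<m. q (Suc i mod n)) = (\<Sum>i<m. q (Suc i))" unfolding m by (rule sum.cong) auto
  also have "q (Suc m mod n) = q 0" unfolding m by simp
  also have "(\<Sum>i<m. q (Suc i)) + q 0 = (\<Sum>i<n. q i)" unfolding m by (subst sum.lessThan_Suc_shift) simp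
  finally have "(\<Sum>i<n. q i + q (Suc i mod n)) = 2" using s by (simp add: sum.distrib)
  then obtain i where i: "i < n" "q i + q (Suc i mod n) \<le> 2 / real n"
    using exists_small[of n "\<lambda>i. q i + q (Suc i mod n)" 2] n by auto
  have ne: "i \<noteq> Suc i mod n"
  proof (cases "Suc i < n")
    case True thus ?thesis by simp
  next
    case False hence "Suc i = n" using i by simp
    thus ?thesis using n by auto
  qed
  show ?thesis using i ne n by (intro exI[of _ i] exI[of _ "Suc i mod n"]) auto
qed


lemma main_case:
  fixes n :: nat and L B \<epsilon> :: real
  assumes n2: "n \<ge> 2" and L: "L > 0" and B: "B > 0" and e: "\<epsilon> > 0" and eL: "\<epsilon> \<le> L * B\<^sup>2 / 4"
    and pifo: "pifo_alg n p gam alg"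
  shows "\<exists>d F xs. real d \<le> 2 * (1 + B * sqrt (L / (real n * \<epsilon>))) \<and>
          (\<forall>i<n. L_smooth d L (F i) \<and> convex_d d (F i)) \<and>
          is_minimizer d (avg_fun n F) xs \<and>
          norm_d d (vsub (alg d []) xs) \<le> B \<and>
          (\<forall>t::nat. real t \<le> 1/32 * (real n + B * sqrt (real n * L / \<epsilon>)) \<longrightarrow>
             expect_iter n d p F gam alg (avg_fun n F) t - avg_fun n F xs \<ge> \<epsilon>)"
proof -
  have n0: "real n > 0" using n2 by simp
  define S where "S = sqrt (L / (real n * \<epsilon>))"
  have S0: "S \<ge> 0" unfolding S_def using L e n0 by simp
  have S2: "S\<^sup>2 = L / (real n * \<epsilon>)" unfolding S_def using L e n0 by simp
  define K where "K = B * S / 3"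
  have K0: "K \<ge> 0" unfolding K_def using B S0 by simp
  have sq: "sqrt (real n * L / \<epsilon>) = real n * S"
  proof -
    have "real n * L / \<epsilon> = (real n)\<^sup>2 * (L / (real n * \<epsilon>))" using n0 e by (simp add: field_simps power2_eq_square)
    hence "sqrt (real n * L / \<epsilon>) = sqrt ((real n)\<^sup>2 * (L / (real n * \<epsilon>)))" by (simp only:)
    also have "\<dots> = sqrt ((real n)\<^sup>2) * S" unfolding S_def by (rule real_sqrt_mult)
    finally show ?thesis by simp
  qed
  have tb: "real t \<le> (real n + 3 * real n * K) / 32" if "real t \<le> 1/32 * (real n + B * sqrt (real n * L / \<epsilon>))" for t :: nat
    using that unfolding sq K_def by (simp add: algebra_simps)
  show ?thesis
  proof (cases "K \<ge> 1")
    case True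
    define k where "k = nat \<lfloor>K\<rfloor>"
    have fl: "\<lfloor>K\<rfloor> \<ge> 1" using True by simp
    have rk: "real k = of_int \<lfloor>K\<rfloor>" unfolding k_def using fl by simp
    have k1: "k \<ge> 1" unfolding k_def using fl by linarith
    have kK: "real k \<le> K" unfolding rk by simp
    have Kk: "K \<le> 2 * real k" using rk k1 
    proof -
      have "K < real k + 1" using floor_correct[of K] rk by simp
      moreover have "real k \<ge> 1" using k1 by simp
      ultimately show ?thesis by linarith
    qed
    obtain i0 i1 where ii: "i0 < n" "i1 < n" "i0 \<noteq> i1" "p (2*k) i0 + p (2*k) i1 \<le> 2 / real n"
      using exists_pair[OF n2 pifo_parts(4)[OF pifo, where d="2*k"]] by blast
    have pn: "p (2*k) i0 \<ge> 0" "p (2*k) i1 \<ge> 0" using pifo_parts(3)[OF pifo, where d="2*k"] ii by auto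
    obtain F xs where H: "(\<forall>i<n. L_smooth (2*k) L (F i) \<and> convex_d (2*k) (F i)) \<and> is_minimizer (2*k) (avg_fun n F) xs
     \<and> norm_d (2*k) (vsub (alg (2*k) []) xs) \<le> B
     \<and> (\<forall>t. expect_iter n (2*k) p F gam alg (avg_fun n F) t - avg_fun n F xs
            \<ge> (L * B\<^sup>2 / (4 * real n * (real k)\<^sup>2)) * (1 - real t * (p (2*k) i0 + p (2*k) i1) / real k))"
      apply (rule that)
      apply (rule chain_instance[OF pifo k1 L B ii(1) ii(2) ii(3)])
      done
    define G where "G = L * B\<^sup>2 / (4 * real n * (real k)\<^sup>2)"
    have kpos: "real k > 0" using k1 by simp
    have G0: "G \<ge> 0" unfolding G_def using L by simp
    have Geps: "G / 2 \<ge> \<epsilon>"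
    proof -
      have "(real k)\<^sup>2 \<le> K\<^sup>2" using kK kpos by (intro power_mono) auto
      also have "K\<^sup>2 = B\<^sup>2 * L / (9 * real n * \<epsilon>)" unfolding K_def using S2 by (simp add: power_mult_distrib power_divide)
      finally have "(real k)\<^sup>2 \<le> B\<^sup>2 * L / (9 * real n * \<epsilon>)" .
      hence "(real k)\<^sup>2 * (9 * real n * \<epsilon>) \<le> B\<^sup>2 * L" using n0 e by (simp add: le_divide_eq)
      hence "\<epsilon> * (8 * real n * (real k)\<^sup>2) \<le> L * B\<^sup>2" using L B e n0
      proof -
        have "\<epsilon> * (8 * real n * (real k)\<^sup>2) = (8/9) * ((real k)\<^sup>2 * (9 * real n * \<epsilon>))" by simp
        also have "\<dots> \<le> (8/9) * (B\<^sup>2 * L)" using \<open>(real k)\<^sup>2 * (9 * real n * \<epsilon>) \<le> B\<^sup>2 * L\<close>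
          by (rule mult_left_mono) simp
        also have "\<dots> \<le> L * B\<^sup>2"
        proof -
          have "B\<^sup>2 * L \<ge> 0" using L by simp
          thus ?thesis by (simp add: mult.commute)
        qed
        finally show ?thesis .
      qed
      thus ?thesis unfolding G_def using n0 kpos by (simp add: field_simps)
    qed
    show ?thesis
    proof (rule exI[of _ "2*k"], rule exI[of _ F], rule exI[of _ xs], intro conjI)
      show "real (2*k) \<le> 2 * (1 + B * sqrt (L / (real n * \<epsilon>)))"
        using kK K0 unfolding K_def S_def by simp
      show "\<forall>i<n. L_smooth (2*k) L (F i) \<and> convex_d (2*k) (F i)" using H by blast
      show "is_minimizer (2*k) (avg_fun n F) xs" using H by blast
      show "norm_d (2*k) (vsub (alg (2*k) []) xs) \<le> B" using H by blast
      show "\<forall>t::nat. real t \<le> 1/32 * (real n + B * sqrt (real n * L / \<epsilon>)) \<longrightarrow>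
             expect_iter n (2*k) p F gam alg (avg_fun n F) t - avg_fun n F xs \<ge> \<epsilon>"
      proof (intro allI impI)
      fix t :: nat assume t: "real t \<le> 1/32 * (real n + B * sqrt (real n * L / \<epsilon>))"
      have t1: "real t \<le> real n * real k / 4"
      proof -
        have "real t \<le> (real n + 3 * real n * K) / 32" by (rule tb[OF t])
        also have "\<dots> \<le> (4 * real n * K) / 32" using True n0 by simp
        also have "\<dots> \<le> (4 * real n * (2 * real k)) / 32" using Kk n0 by simp
        finally show ?thesis by (simp add: mult.commute)
      qed
      have X: "real t * (p (2*k) i0 + p (2*k) i1) / real k \<le> 1/2"
      proof -
        have "real t * (p (2*k) i0 + p (2*k) i1) \<le> (real n * real k / 4) * (2 / real n)"
          using t1 ii(4) pn by (intro mult_mono) auto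
        also have "\<dots> = real k / 2" using n0 by simp
        finally show ?thesis using kpos by (simp add: divide_le_eq)
      qed
      have "G / 2 \<le> G * (1 - real t * (p (2*k) i0 + p (2*k) i1) / real k)"
      proof -
        have "1/2 \<le> 1 - real t * (p (2*k) i0 + p (2*k) i1) / real k" using X by linarith
        from mult_left_mono[OF this G0] show ?thesis by simp
      qed
      also have "\<dots> \<le> expect_iter n (2*k) p F gam alg (avg_fun n F) t - avg_fun n F xs"
        using H unfolding G_def by blast
      finally show "\<epsilon> \<le> expect_iter n (2*k) p F gam alg (avg_fun n F) t - avg_fun n F xs" using Geps by simp
      qed
    qed
  next
    case False
    hence K1: "K < 1" by simp
    obtain i0 where i0: "i0 < n" "p 2 i0 \<le> 1 / real n"
      using exists_small[OF _ pifo_parts(4)[OF pifo, where d=2]] n0 by auto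
    have pn: "p 2 i0 \<ge> 0" using pifo_parts(3)[OF pifo, where d=2] i0 by auto
    obtain F xs where H: "(\<forall>i<n. L_smooth 2 L (F i) \<and> convex_d 2 (F i)) \<and> is_minimizer 2 (avg_fun n F) xs
     \<and> norm_d 2 (vsub (alg 2 []) xs) \<le> B
     \<and> (\<forall>t. expect_iter n 2 p F gam alg (avg_fun n F) t - avg_fun n F xs
            \<ge> (L * B\<^sup>2 / 2) * (1 - real t * p 2 i0))"
      apply (rule that)
      apply (rule omega_instance[OF pifo n2 L B i0(1)])
      done
    show ?thesis
    proof (rule exI[of _ "2::nat"], rule exI[of _ F], rule exI[of _ xs], intro conjI)
      show "real (2::nat) \<le> 2 * (1 + B * sqrt (L / (real n * \<epsilon>)))"
        using B S0 unfolding S_def by simp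
      show "\<forall>i<n. L_smooth 2 L (F i) \<and> convex_d 2 (F i)" using H by blast
      show "is_minimizer 2 (avg_fun n F) xs" using H by blast
      show "norm_d 2 (vsub (alg 2 []) xs) \<le> B" using H by blast
      show "\<forall>t::nat. real t \<le> 1/32 * (real n + B * sqrt (real n * L / \<epsilon>)) \<longrightarrow>
             expect_iter n 2 p F gam alg (avg_fun n F) t - avg_fun n F xs \<ge> \<epsilon>"
      proof (intro allI impI)
      fix t :: nat assume t: "real t \<le> 1/32 * (real n + B * sqrt (real n * L / \<epsilon>))"
      have t1: "real t \<le> real n / 8"
      proof -
        have "real t \<le> (real n + 3 * real n * K) / 32" by (rule tb[OF t])
        also have "\<dots> \<le> (4 * real n) / 32" using K1 n0 by simp
        finally show ?thesis by simp
      qed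
      have X: "real t * p 2 i0 \<le> 1/8"
      proof -
        have "real t * p 2 i0 \<le> (real n / 8) * (1 / real n)" using t1 i0(2) pn by (intro mult_mono) auto
        thus ?thesis using n0 by simp
      qed
      have "L * B\<^sup>2 \<ge> 0" using L by simp
      hence "\<epsilon> \<le> (L * B\<^sup>2 / 2) * (7/8)" using eL by simp
      also have "\<dots> \<le> (L * B\<^sup>2 / 2) * (1 - real t * p 2 i0)"
        using X L by (intro mult_left_mono) auto
      also have "\<dots> \<le> expect_iter n 2 p F gam alg (avg_fun n F) t - avg_fun n F xs"
        using H by blast
      finally show "\<epsilon> \<le> expect_iter n 2 p F gam alg (avg_fun n F) t - avg_fun n F xs" .
      qed
    qed
  qed
qed

theorem theorem3p2:
  shows "\<exists>c>0. \<exists>C>0. \<forall>(n::nat) (L::real) (B::real) (\<epsilon>::real).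
     n \<ge> 2 \<and> L > 0 \<and> B > 0 \<and> \<epsilon> > 0 \<and> \<epsilon> \<le> L * B\<^sup>2 / 4 \<longrightarrow>
     (\<forall>p gam alg. pifo_alg n p gam alg \<longrightarrow>
       (\<exists>d F xs. real d \<le> C * (1 + B * sqrt (L / (real n * \<epsilon>))) \<and>
          (\<forall>i<n. L_smooth d L (F i) \<and> convex_d d (F i)) \<and>
          is_minimizer d (avg_fun n F) xs \<and>
          norm_d d (vsub (alg d []) xs) \<le> B \<and>
          (\<forall>t::nat. real t \<le> c * (real n + B * sqrt (real n * L / \<epsilon>)) \<longrightarrow>
             expect_iter n d p F gam alg (avg_fun n F) t - avg_fun n F xs \<ge> \<epsilon>)))"
  apply (rule exI[of _ "1/32"], rule conjI, simp)
  apply (rule exI[of _ "2"], rule conjI, simp)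
  using main_case by blast


end
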